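(* For $0\le k\le n-1$, the degree $k$ component of $\mathfrak{pvb}_n^!$ has dimension $L(n,n-k)$, where the Lah number $L(n,n-k)$ is the number of unordered partitions of $[n]=\{1,\dots,n\}$ into $n-k$ nonempty linearly ordered subsets.
   Context: $\mathfrak{pvb}_n^!$ is the graded $\mathbb{Q}$-algebra obtained as the quotient of the exterior algebra on degree-1 generators $r_{ij}$, $1\le i\ne j\le n$, by the ideal generated by $r_{ij}\wedge r_{ik}=r_{ij}\wedge r_{jk}-r_{ik}\wedge r_{kj}$, $r_{ik}\wedge r_{jk}=r_{ij}\wedge r_{jk}-r_{ji}\wedge r_{ik}$ (for $i,j,k$ distinct) and $r_{ij}\wedge r_{ji}=0$. *)

theory Defs
  imports Complex_Main "HOL-Library.Product_Lexorder" "HOL-Library.Function_Algebras"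
begin

text \<open>The exterior algebra over the rationals on generators r_ij, (i,j) in gens n, is
  modelled by coefficient functions on (finite) sets of generators: f S is the
  coefficient of the basis monomial e_S = r_{s1} \<and> ... \<and> r_{sm}, where s1 < ... < sm
  in the (lexicographic) linear order on pairs.\<close>

type_synonym gen = "nat \<times> nat"
type_synonym ext = "gen set \<Rightarrow> rat"

definition gens :: "nat \<Rightarrow> gen set" where
  "gens n = {(i, j). 1 \<le> i \<and> i \<le> n \<and> 1 \<le> j \<and> j \<le> n \<and> i \<noteq> j}"

definition qscale :: "rat \<Rightarrow> ext \<Rightarrow> ext" where
  "qscale c f = (\<lambda>S. c * f S)"

text \<open>sign of e_S \<and> e_T = sign S T * e_(S \<union> T) for disjoint S, T\<close>
definition wsign :: "gen set \<Rightarrow> gen set \<Rightarrow> rat" where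
  "wsign S T = (-1) ^ card {(s, t). s \<in> S \<and> t \<in> T \<and> t < s}"

definition wedge :: "ext \<Rightarrow> ext \<Rightarrow> ext" where
  "wedge f g = (\<lambda>U. \<Sum>S\<in>Pow U. wsign S (U - S) * f S * g (U - S))"

definition mono :: "gen set \<Rightarrow> ext" where
  "mono S = (\<lambda>U. if U = S then 1 else 0)"

definition r :: "nat \<Rightarrow> nat \<Rightarrow> ext" where
  "r i j = mono {(i, j)}"

definition rels :: "nat \<Rightarrow> ext set" where
  "rels n =
     {wedge (r i j) (r i k) - (wedge (r i j) (r j k) - wedge (r i k) (r k j)) | i j k.
        i \<in> {1..n} \<and> j \<in> {1..n} \<and> k \<in> {1..n} \<and> i \<noteq> j \<and> i \<noteq> k \<and> j \<noteq> k}
   \<union> {wedge (r i k) (r j k) - (wedge (r i j) (r j k) - wedge (r j i) (r i k)) | i j k.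
        i \<in> {1..n} \<and> j \<in> {1..n} \<and> k \<in> {1..n} \<and> i \<noteq> j \<and> i \<noteq> k \<and> j \<noteq> k}
   \<union> {wedge (r i j) (r j i) | i j. i \<in> {1..n} \<and> j \<in> {1..n} \<and> i \<noteq> j}"

definition ext_deg :: "nat \<Rightarrow> nat \<Rightarrow> ext set" where
  "ext_deg n k = module.span qscale {mono S | S. S \<subseteq> gens n \<and> card S = k}"

text \<open>degree k component of the (homogeneous) two-sided ideal generated by the relations\<close>
definition ideal_deg :: "nat \<Rightarrow> nat \<Rightarrow> ext set" where
  "ideal_deg n k = module.span qscale
     {wedge (wedge (mono A) q) (mono B) | A B q.
        A \<subseteq> gens n \<and> B \<subseteq> gens n \<and> card A + card B + 2 = k \<and> q \<in> rels n}"

text \<open>dimension of the degree k component of the quotient pvb_n^!\<close>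
definition pvb_dual_dim :: "nat \<Rightarrow> nat \<Rightarrow> nat" where
  "pvb_dual_dim n k =
     vector_space.dim qscale (ext_deg n k) - vector_space.dim qscale (ideal_deg n k)"

definition lah_partitions :: "nat \<Rightarrow> nat \<Rightarrow> nat list set set" where
  "lah_partitions n m =
     {P. (\<forall>xs\<in>P. xs \<noteq> [] \<and> distinct xs) \<and>
         (\<forall>xs\<in>P. \<forall>ys\<in>P. xs \<noteq> ys \<longrightarrow> set xs \<inter> set ys = {}) \<and>
         (\<Union>xs\<in>P. set xs) = {1..n} \<and> finite P \<and> card P = m}"

definition lah :: "nat \<Rightarrow> nat \<Rightarrow> nat" where
  "lah n m = card (lah_partitions n m)"

end

theory Submission
  imports Defs
begin

interpretation Q: vector_space qscale
  by unfold_locales (auto simp: qscale_def fun_eq_iff algebra_simps)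

lemma qscale_apply[simp]: "qscale c f U = c * f U" by (simp add: qscale_def)

definition invp :: "gen set \<Rightarrow> gen set \<Rightarrow> (gen \<times> gen) set" where
  "invp A B = {(s, t). s \<in> A \<and> t \<in> B \<and> t < s}"

lemma wsign_invp: "wsign A B = (-1) ^ card (invp A B)"
  by (simp add: wsign_def invp_def)

lemma finite_invp[intro]: "finite A \<Longrightarrow> finite B \<Longrightarrow> finite (invp A B)"
  by (rule finite_subset[of _ "A \<times> B"]) (auto simp: invp_def)

lemma wsign_sq[simp]: "wsign A B * wsign A B = 1"
  by (simp add: wsign_def power_mult_distrib[symmetric] flip: power_add mult_2)

lemma wsign_nz[simp]: "wsign A B \<noteq> 0"
  by (simp add: wsign_def)

lemma wsign_empty1[simp]: "wsign {} B = 1" and wsign_empty2[simp]: "wsign A {} = 1"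
  by (simp_all add: wsign_def)

lemma wsign_Un1:
  assumes "finite A" "finite B" "finite C" "A \<inter> B = {}"
  shows "wsign (A \<union> B) C = wsign A C * wsign B C"
proof -
  have "invp (A \<union> B) C = invp A C \<union> invp B C" by (auto simp: invp_def)
  moreover have "invp A C \<inter> invp B C = {}" using assms(4) by (auto simp: invp_def)
  ultimately have "card (invp (A \<union> B) C) = card (invp A C) + card (invp B C)"
    using assms by (simp add: card_Un_disjoint finite_invp)
  thus ?thesis by (simp add: wsign_invp power_add)
qed

lemma wsign_Un2:
  assumes "finite A" "finite B" "finite C" "B \<inter> C = {}"
  shows "wsign A (B \<union> C) = wsign A B * wsign A C"
proof -
  have "invp A (B \<union> C) = invp A B \<union> invp A C" by (auto simp: invp_def)
  moreover have "invp A B \<inter> invp A C = {}" using assms(4) by (auto simp: invp_def)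
  ultimately have "card (invp A (B \<union> C)) = card (invp A B) + card (invp A C)"
    using assms by (simp add: card_Un_disjoint finite_invp)
  thus ?thesis by (simp add: wsign_invp power_add)
qed

lemma wedge_infinite: "infinite U \<Longrightarrow> wedge f g U = 0"
  by (simp add: wedge_def)

lemma wedge_add1: "wedge (f + g) h = wedge f h + wedge g h"
  by (simp add: wedge_def fun_eq_iff algebra_simps sum.distrib)
lemma wedge_add2: "wedge f (g + h) = wedge f g + wedge f h"
  by (simp add: wedge_def fun_eq_iff algebra_simps sum.distrib)
lemma wedge_scale1: "wedge (qscale c f) h = qscale c (wedge f h)"
  by (simp add: wedge_def fun_eq_iff algebra_simps sum_distrib_left)
lemma wedge_scale2: "wedge f (qscale c h) = qscale c (wedge f h)"
  by (simp add: wedge_def fun_eq_iff algebra_simps sum_distrib_left)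
lemma wedge_zero1[simp]: "wedge 0 h = 0"
  by (simp add: wedge_def fun_eq_iff)
lemma wedge_zero2[simp]: "wedge f 0 = 0"
  by (simp add: wedge_def fun_eq_iff)
lemma wedge_diff1: "wedge (f - g) h = wedge f h - wedge g h"
  by (simp add: wedge_def fun_eq_iff algebra_simps sum_subtractf)
lemma wedge_diff2: "wedge f (g - h) = wedge f g - wedge f h"
  by (simp add: wedge_def fun_eq_iff algebra_simps sum_subtractf)
lemma wedge_uminus1: "wedge (- f) h = - wedge f h"
  by (simp add: wedge_def fun_eq_iff sum_negf)
lemma wedge_uminus2: "wedge f (- h) = - wedge f h"
  by (simp add: wedge_def fun_eq_iff sum_negf)
lemma wedge_sum1: "wedge (\<Sum>i\<in>I. F i) h = (\<Sum>i\<in>I. wedge (F i) h)"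
proof (induction I rule: infinite_finite_induct)
  case (infinite A) thus ?case by (metis sum.infinite wedge_zero1)
next case empty thus ?case by (metis sum.empty wedge_zero1)
next case (insert x A) thus ?case by (metis sum.insert wedge_add1)
qed
lemma wedge_sum2: "wedge h (\<Sum>i\<in>I. F i) = (\<Sum>i\<in>I. wedge h (F i))"
proof (induction I rule: infinite_finite_induct)
  case (infinite A) thus ?case by (metis sum.infinite wedge_zero2)
next case empty thus ?case by (metis sum.empty wedge_zero2)
next case (insert x A) thus ?case by (metis sum.insert wedge_add2)
qed

lemma mono_mult:
  assumes "finite A" "finite B"
  shows "wedge (mono A) (mono B) = (if A \<inter> B = {} then qscale (wsign A B) (mono (A \<union> B)) else 0)"
proof (rule ext)
  fix U
  show "wedge (mono A) (mono B) U = (if A \<inter> B = {} then qscale (wsign A B) (mono (A \<union> B)) else 0) U"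
  proof (cases "finite U")
    case False
    then have "U \<noteq> A \<union> B" using assms by auto
    then show ?thesis using False by (simp add: wedge_infinite mono_def)
  next
    case True
    have "wedge (mono A) (mono B) U = (\<Sum>S\<in>Pow U. if S = A then wsign S (U - S) * mono B (U - S) else 0)"
      unfolding wedge_def by (rule sum.cong) (auto simp: mono_def)
    also have "\<dots> = (if A \<subseteq> U then wsign A (U - A) * mono B (U - A) else 0)"
      using True by (simp add: sum.delta')
    also have "\<dots> = (if A \<inter> B = {} then qscale (wsign A B) (mono (A \<union> B)) else 0) U"
      by (auto simp: mono_def)
    finally show ?thesis .
  qed
qed

lemma wedge_assoc: "wedge (wedge f g) h = wedge f (wedge g h)"
proof (rule ext)
  fix U
  show "wedge (wedge f g) h U = wedge f (wedge g h) U"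
  proof (cases "finite U")
    case False then show ?thesis by (simp add: wedge_infinite)
  next
    case fin: True
    have "wedge (wedge f g) h U =
      (\<Sum>S\<in>Pow U. \<Sum>R\<in>Pow S. wsign S (U - S) * wsign R (S - R) * f R * g (S - R) * h (U - S))"
      unfolding wedge_def by (simp add: sum_distrib_left sum_distrib_right mult.assoc mult.left_commute)
    also have "\<dots> = (\<Sum>(S,R)\<in>Sigma (Pow U) Pow. wsign S (U - S) * wsign R (S - R) * f R * g (S - R) * h (U - S))"
      using fin by (subst sum.Sigma) (auto intro: finite_subset)
    also have "\<dots> = (\<Sum>(R,T)\<in>Sigma (Pow U) (\<lambda>R. Pow (U - R)). wsign R (U - R) * wsign T (U - R - T) * f R * g T * h (U - R - T))"
    proof (rule sum.reindex_bij_witness[where i = "\<lambda>(R,T). (R \<union> T, R)" and j = "\<lambda>(S,R). (R, S - R)"])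
      fix a assume a: "a \<in> Sigma (Pow U) Pow"
      obtain S R where aa: "a = (S, R)" by fastforce
      have RS: "R \<subseteq> S" "S \<subseteq> U" using a aa by auto
      have fR: "finite R" "finite (S - R)" "finite (U - S)" using RS fin by (auto intro: finite_subset)
      have e1: "U - R - (S - R) = U - S" using RS by auto
      have e2: "U - R = (S - R) \<union> (U - S)" using RS by auto
      have e3: "S = R \<union> (S - R)" using RS by auto
      have "wsign S (U - S) = wsign R (U - S) * wsign (S - R) (U - S)"
        using wsign_Un1[of R "S - R" "U - S"] fR e3 by auto
      moreover have "wsign R (U - R) = wsign R (S - R) * wsign R (U - S)"
        using wsign_Un2[of R "S - R" "U - S"] fR e2 by auto
      ultimately show "(case (case a of (S, R) \<Rightarrow> (R, S - R)) of (R, T) \<Rightarrow> wsign R (U - R) * wsign T (U - R - T) * f R * g T * h (U - R - T)) =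
         (case a of (S, R) \<Rightarrow> wsign S (U - S) * wsign R (S - R) * f R * g (S - R) * h (U - S))"
        using aa e1 by (simp add: algebra_simps)
    qed (auto intro: finite_subset)
    also have "\<dots> = (\<Sum>R\<in>Pow U. \<Sum>T\<in>Pow (U - R). wsign R (U - R) * wsign T (U - R - T) * f R * g T * h (U - R - T))"
      using fin by (subst sum.Sigma) (auto intro: finite_subset)
    also have "\<dots> = wedge f (wedge g h) U"
      unfolding wedge_def by (simp add: sum_distrib_left sum_distrib_right mult.assoc mult.left_commute)
    finally show ?thesis .
  qed
qed


definition fs :: "ext \<Rightarrow> bool" where "fs f \<longleftrightarrow> (\<forall>U. infinite U \<longrightarrow> f U = 0)"
definition deg1 :: "ext \<Rightarrow> bool" where "deg1 f \<longleftrightarrow> (\<forall>U. f U \<noteq> 0 \<longrightarrow> card U = 1)"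

lemma fs_wedge[simp]: "fs (wedge f g)" by (simp add: fs_def wedge_infinite)
lemma fs_mono[simp]: "finite S \<Longrightarrow> fs (mono S)" by (auto simp: fs_def mono_def)
lemma deg1_fs: "deg1 f \<Longrightarrow> fs f" by (auto simp: fs_def deg1_def)

lemma wedge_unit1: "fs f \<Longrightarrow> wedge (mono {}) f = f"
proof (rule ext)
  fix U assume "fs f"
  show "wedge (mono {}) f U = f U"
  proof (cases "finite U")
    case True
    have "wedge (mono {}) f U = (\<Sum>S\<in>Pow U. if S = {} then wsign S (U - S) * f (U - S) else 0)"
      unfolding wedge_def by (rule sum.cong) (auto simp: mono_def)
    also have "\<dots> = f U" using True by (simp add: sum.delta')
    finally show ?thesis .
  qed (use \<open>fs f\<close> in \<open>auto simp: fs_def wedge_infinite\<close>)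
qed

lemma wedge_unit2: "fs f \<Longrightarrow> wedge f (mono {}) = f"
proof (rule ext)
  fix U assume "fs f"
  show "wedge f (mono {}) U = f U"
  proof (cases "finite U")
    case True
    have "wedge f (mono {}) U = (\<Sum>S\<in>Pow U. if S = U then wsign S (U - S) * f S else 0)"
      unfolding wedge_def by (rule sum.cong) (auto simp: mono_def)
    also have "\<dots> = f U" using True by (simp add: sum.delta')
    finally show ?thesis .
  qed (use \<open>fs f\<close> in \<open>auto simp: fs_def wedge_infinite\<close>)
qed

lemma wsign_single: "wsign {s} {t} = (if t < s then -1 else 1)"
proof -
  have "{(a, b). a \<in> {s} \<and> b \<in> {t} \<and> b < a} = (if t < s then {(s,t)} else {})" by auto
  thus ?thesis by (simp add: wsign_def)
qed

lemma wsign_single_swap: "s \<noteq> t \<Longrightarrow> wsign {s} {t} = - wsign {t} {s}"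
  by (auto simp: wsign_single)

lemma card1_sing: "card U = 1 \<Longrightarrow> \<exists>u. U = {u}" by (simp add: card_1_singleton_iff)

lemma deg1_anticomm:
  assumes "deg1 x" "deg1 y"
  shows "wedge x y = - wedge y x"
proof (rule ext)
  fix U
  show "wedge x y U = (- wedge y x) U"
  proof (cases "finite U")
    case False then show ?thesis by (simp add: wedge_infinite)
  next
    case fin: True
    have "wedge y x U = (\<Sum>S\<in>Pow U. wsign (U - S) (U - (U - S)) * y (U - S) * x (U - (U - S)))"
      unfolding wedge_def
      by (rule sum.reindex_bij_witness[where i = "\<lambda>S. U - S" and j = "\<lambda>S. U - S"]) (auto simp: Diff_Diff_Int Int_absorb1)
    also have "\<dots> = (\<Sum>S\<in>Pow U. - (wsign S (U - S) * x S * y (U - S)))"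
    proof (rule sum.cong[OF refl])
      fix S assume S: "S \<in> Pow U"
      have e: "U - (U - S) = S" using S by auto
      show "wsign (U - S) (U - (U - S)) * y (U - S) * x (U - (U - S)) = - (wsign S (U - S) * x S * y (U - S))"
      proof (cases "x S \<noteq> 0 \<and> y (U - S) \<noteq> 0")
        case True
        have c1: "card S = 1" using True assms(1) by (simp add: deg1_def)
        have c2: "card (U - S) = 1" using True assms(2) by (simp add: deg1_def)
        obtain s where s: "S = {s}" using c1 card_1_singletonE by blast
        obtain t where t: "U - S = {t}" using c2 card_1_singletonE by blast
        note st = s t
        then have "s \<noteq> t" by auto
        then show ?thesis unfolding e using st wsign_single_swap[of t s] by simp
      qed (auto simp: e)
    qed
    also have "\<dots> = - wedge x y U" by (simp add: wedge_def sum_negf)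
    finally show ?thesis by simp
  qed
qed

lemma deg1_sq: assumes "deg1 x" shows "wedge x x = 0"
proof -
  have "wedge x x = - wedge x x" using deg1_anticomm[OF assms assms] .
  then have "\<And>U. wedge x x U = - wedge x x U" by (metis uminus_apply)
  then show ?thesis by (simp add: fun_eq_iff)
qed

lemma deg1_add: assumes "deg1 x" "deg1 y" shows "deg1 (x + y)"
  unfolding deg1_def
proof (intro allI impI)
  fix U assume "(x + y) U \<noteq> 0" then have "x U \<noteq> 0 \<or> y U \<noteq> 0" by auto
  then show "card U = 1" using assms unfolding deg1_def by blast
qed
lemma deg1_diff: assumes "deg1 x" "deg1 y" shows "deg1 (x - y)"
  unfolding deg1_def
proof (intro allI impI)
  fix U assume "(x - y) U \<noteq> 0" then have "x U \<noteq> 0 \<or> y U \<noteq> 0" by auto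
  then show "card U = 1" using assms unfolding deg1_def by blast
qed
lemma deg1_zero[simp]: "deg1 0" by (auto simp: deg1_def)
lemma deg1_mono[simp]: "deg1 (mono {e})" by (auto simp: deg1_def mono_def)
lemma deg1_sum: "(\<And>i. i \<in> I \<Longrightarrow> deg1 (F i)) \<Longrightarrow> deg1 (\<Sum>i\<in>I. F i)"
  by (induction I rule: infinite_finite_induct) (auto intro: deg1_add)

definition Pf :: "(gen \<Rightarrow> ext) \<Rightarrow> gen set \<Rightarrow> ext" where
  "Pf x S = foldr (\<lambda>e acc. wedge (x e) acc) (sorted_list_of_set S) (mono {})"

lemma Pf_empty[simp]: "Pf x {} = mono {}" by (simp add: Pf_def)

lemma Pf_Min: assumes "finite S" "S \<noteq> {}"
  shows "Pf x S = wedge (x (Min S)) (Pf x (S - {Min S}))"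
  using assms by (simp add: Pf_def sorted_list_of_set_nonempty)

lemma Pf_fs: "finite S \<Longrightarrow> fs (Pf x S)"
  by (cases "S = {}") (auto simp: Pf_Min)

lemma Pf_insert_min: assumes "finite C" "\<forall>c\<in>C. a < c"
  shows "Pf x (insert a C) = wedge (x a) (Pf x C)"
proof -
  have aC: "a \<notin> C"
  proof
    assume "a \<in> C" then have "a < a" using assms(2) by blast
    then show False by simp
  qed
  have m: "Min (insert a C) = a"
  proof (rule Min_eqI)
    show "finite (insert a C)" using assms by simp
    fix y assume "y \<in> insert a C" then show "a \<le> y" using assms(2) by (auto intro: less_imp_le)
  qed simp
  have i: "insert a C - {a} = C" using aC by simp
  show ?thesis using Pf_Min[of "insert a C" x] assms(1) unfolding m i by simp
qed

lemma wsign_single_set: "finite C \<Longrightarrow> wsign {a} C = (-1) ^ card {c \<in> C. c < a}"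
proof -
  have "card {(s, t). s \<in> {a} \<and> t \<in> C \<and> t < s} = card {c \<in> C. c < a}"
    by (rule bij_betw_same_card[of snd]) (auto simp: bij_betw_def inj_on_def image_def)
  thus ?thesis by (simp add: wsign_def)
qed

lemma wedge_x_Pf:
  assumes d: "\<And>e. deg1 (x e)" and "finite C"
  shows "wedge (x a) (Pf x C) = (if a \<in> C then 0 else qscale (wsign {a} C) (Pf x (insert a C)))"
  using assms(2)
proof (induction "card C" arbitrary: C rule: less_induct)
  case less
  show ?case
  proof (cases "C = {}")
    case True
    then show ?thesis using d deg1_fs[OF d[of a]]
      by (simp add: wedge_unit2 Pf_insert_min[of "{}" a x, simplified] wedge_unit2)
  next
    case False
    define c where "c = Min C"
    define C' where "C' = C - {c}"
    have cC: "c \<in> C" using False less.prems c_def by auto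
    have PC: "Pf x C = wedge (x c) (Pf x C')" using Pf_Min[OF less.prems False] c_def C'_def by simp
    have cmin: "\<forall>d\<in>C'. c < d" using less.prems by (auto simp: C'_def c_def less_le)
    have fC': "finite C'" using less.prems by (simp add: C'_def)
    have cardC': "card C' < card C" unfolding C'_def using card_Diff1_less[OF less.prems cC] .
    consider "a < c" | "a = c" | "c < a" by fastforce
    then show ?thesis
    proof cases
      case 1
      have ad: "\<forall>d\<in>C. a < d" using 1 Min_le[OF less.prems] c_def by (meson less_le_trans)
      then have "a \<notin> C" by (meson less_irrefl)
      note this ad
      moreover have "wsign {a} C = 1" using calculation less.prems
      proof -
        have e: "{c \<in> C. c < a} = {}" using ad by (auto dest: less_asym)
        show ?thesis by (subst wsign_single_set[OF less.prems]) (simp only: e card.empty power_0)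
      qed
      ultimately show ?thesis using Pf_insert_min[OF less.prems, of a x] by simp
    next
      case 2
      then show ?thesis using PC cC by (simp flip: wedge_assoc add: deg1_sq[OF d])
    next
      case 3
      have "wedge (x a) (Pf x C) = wedge (wedge (x a) (x c)) (Pf x C')" using PC by (simp add: wedge_assoc)
      also have "\<dots> = - wedge (x c) (wedge (x a) (Pf x C'))"
        by (simp add: deg1_anticomm[OF d[of a] d[of c]] wedge_uminus1 wedge_assoc)
      finally have E: "wedge (x a) (Pf x C) = - wedge (x c) (wedge (x a) (Pf x C'))" .
      note IH = less.hyps[OF cardC' fC']
      show ?thesis
      proof (cases "a \<in> C")
        case True
        then have "a \<in> C'" using 3 by (auto simp: C'_def)
        then show ?thesis using E IH True by simp
      next
        case False
        then have aC': "a \<notin> C'" by (auto simp: C'_def)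
        have m: "\<forall>d\<in>insert a C'. c < d" using cmin 3 by auto
        have ins: "insert a C = insert c (insert a C')" using cC by (auto simp: C'_def)
        have "C = {c} \<union> C'" using cC by (auto simp: C'_def)
        then have "wsign {a} C = wsign {a} ({c} \<union> C')" by simp
        also have "\<dots> = wsign {a} {c} * wsign {a} C'"
          using fC' by (subst wsign_Un2) (auto simp: C'_def)
        also have "\<dots> = - wsign {a} C'" using 3 by (simp add: wsign_single)
        finally have ws: "wsign {a} C = - wsign {a} C'" .
        show ?thesis using E IH aC' False ws
          by (simp add: wedge_scale2 ins Pf_insert_min[OF _ m] fC')
      qed
    qed
  qed
qed

lemma Pf_mult:
  assumes d: "\<And>e. deg1 (x e)" and fA: "finite A" and fB: "finite B"
  shows "wedge (Pf x A) (Pf x B) = (if A \<inter> B = {} then qscale (wsign A B) (Pf x (A \<union> B)) else 0)"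
  using fA
proof (induction "card A" arbitrary: A rule: less_induct)
  case less
  show ?case
  proof (cases "A = {}")
    case True
    then show ?thesis using Pf_fs[OF fB] by (simp add: wedge_unit1)
  next
    case False
    define a where "a = Min A"
    define A' where "A' = A - {a}"
    have aA: "a \<in> A" using False less.prems a_def by auto
    have PA: "Pf x A = wedge (x a) (Pf x A')" using Pf_Min[OF less.prems False] a_def A'_def by simp
    have amin: "\<forall>d\<in>A'. a < d" using less.prems by (auto simp: A'_def a_def less_le)
    have fA': "finite A'" using less.prems by (simp add: A'_def)
    have cardA': "card A' < card A" unfolding A'_def using card_Diff1_less[OF less.prems aA] .
    note IH = less.hyps[OF cardA' fA']
    have E: "wedge (Pf x A) (Pf x B) = wedge (x a) (wedge (Pf x A') (Pf x B))"
      using PA by (simp add: wedge_assoc)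
    show ?thesis
    proof (cases "A' \<inter> B = {}")
      case False
      then have "A \<inter> B \<noteq> {}" by (auto simp: A'_def)
      then show ?thesis using E IH False by simp
    next
      case True
      have E2: "wedge (Pf x A) (Pf x B) = qscale (wsign A' B) (wedge (x a) (Pf x (A' \<union> B)))"
        using E IH True by (simp add: wedge_scale2)
      show ?thesis
      proof (cases "a \<in> B")
        case True
        have "A \<inter> B \<noteq> {}" using True aA by auto
        moreover have "wedge (x a) (Pf x (A' \<union> B)) = 0" by (subst wedge_x_Pf[OF d]) (use fA' fB True in auto)
        ultimately show ?thesis using E2 by simp
      next
        case aB: False
        have aA': "a \<notin> A'" by (simp add: A'_def)
        have Aeq: "A = {a} \<union> A'" using aA by (auto simp: A'_def)
        have ws1: "wsign A B = wsign {a} B * wsign A' B"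
        proof -
          have "wsign A B = wsign ({a} \<union> A') B" using Aeq by simp
          also have "\<dots> = wsign {a} B * wsign A' B" using fA' fB aA' by (intro wsign_Un1) auto
          finally show ?thesis .
        qed
        have ws2: "wsign {a} (A' \<union> B) = wsign {a} A' * wsign {a} B"
          using fA' fB True by (simp add: wsign_Un2)
        have e: "{c \<in> A'. c < a} = {}" using amin by (auto dest: less_asym)
        have ws3: "wsign {a} A' = 1" by (subst wsign_single_set[OF fA']) (simp only: e card.empty power_0)
        have ins: "insert a (A' \<union> B) = A \<union> B" using Aeq by auto
        have "A \<inter> B = {}" using True aB Aeq by auto
        then show ?thesis using E2 wedge_x_Pf[OF d, where C = "A' \<union> B" and a = a] fA' fB aA' aB ws1 ws2 ws3 ins
          by (simp add: qscale_def fun_eq_iff mult.commute)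
      qed
    qed
  qed
qed

lemma Pf_mono_gen: "finite S \<Longrightarrow> Pf (\<lambda>e. mono {e}) S = mono S"
proof (induction "card S" arbitrary: S rule: less_induct)
  case less
  show ?case
  proof (cases "S = {}")
    case False
    define m where "m = Min S"
    have mS: "m \<in> S" using False less.prems m_def by auto
    have IH: "Pf (\<lambda>e. mono {e}) (S - {m}) = mono (S - {m})"
      using less.hyps[OF card_Diff1_less[OF less.prems mS]] less.prems by simp
    have "Pf (\<lambda>e. mono {e}) S = wedge (mono {m}) (mono (S - {m}))"
      using Pf_Min[OF less.prems False] m_def IH by simp
    also have "\<dots> = qscale (wsign {m} (S - {m})) (mono S)"
      using less.prems mS by (simp add: mono_mult insert_absorb)
    also have "wsign {m} (S - {m}) = 1"
    proof -
      have e: "{c \<in> S - {m}. c < m} = {}" using less.prems m_def by (auto dest: Min_le simp: not_less[symmetric])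
      have f: "finite (S - {m})" using less.prems by simp
      show ?thesis by (subst wsign_single_set[OF f]) (simp only: e card.empty power_0)
    qed
    finally show ?thesis by (simp add: qscale_def)
  qed simp
qed

lemma Pf_cong: "finite S \<Longrightarrow> (\<And>e. e \<in> S \<Longrightarrow> x e = y e) \<Longrightarrow> Pf x S = Pf y S"
  unfolding Pf_def by (induction "sorted_list_of_set S") (auto intro!: foldr_cong)

lemma Pf_zero: "finite S \<Longrightarrow> e \<in> S \<Longrightarrow> x e = 0 \<Longrightarrow> Pf x S = 0"
proof (induction "card S" arbitrary: S rule: less_induct)
  case less
  have ne: "S \<noteq> {}" using less.prems by auto
  define m where "m = Min S"
  have mS: "m \<in> S" using ne less.prems m_def by auto
  have P: "Pf x S = wedge (x m) (Pf x (S - {m}))" using Pf_Min[OF less.prems(1) ne] m_def by simp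
  show ?case
  proof (cases "e = m")
    case True then show ?thesis using P less.prems by simp
  next
    case False
    then have "Pf x (S - {m}) = 0" using less.hyps[OF card_Diff1_less[OF less.prems(1) mS]] less.prems mS by simp
    then show ?thesis using P by simp
  qed
qed

lemma Pf_nonzero:
  assumes "finite S" "inj_on g S" "\<And>e. e \<in> S \<Longrightarrow> x e = mono {g e}"
  shows "\<exists>c. c \<noteq> 0 \<and> Pf x S = qscale c (mono (g ` S))"
  using assms
proof (induction "card S" arbitrary: S rule: less_induct)
  case less
  show ?case
  proof (cases "S = {}")
    case True then show ?thesis by (intro exI[of _ 1]) (simp add: qscale_def)
  next
    case False
    define m where "m = Min S"
    have mS: "m \<in> S" using False less.prems m_def by auto
    have h1: "finite (S - {m})" using less.prems(1) by simp
    have h2: "inj_on g (S - {m})" using less.prems(2) by (rule inj_on_diff)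
    have h3: "\<And>e. e \<in> S - {m} \<Longrightarrow> x e = mono {g e}" using less.prems(3) by simp
    obtain c where c: "c \<noteq> 0" "Pf x (S - {m}) = qscale c (mono (g ` (S - {m})))"
      using less.hyps[OF card_Diff1_less[OF less.prems(1) mS] h1 h2 h3] by blast
    have gm: "g m \<notin> g ` (S - {m})" using less.prems(2) mS by (auto simp: inj_on_def)
    have "Pf x S = wedge (mono {g m}) (qscale c (mono (g ` (S - {m}))))"
      using Pf_Min[OF less.prems(1) False] m_def c less.prems(3)[OF mS] by simp
    also have "\<dots> = qscale c (wedge (mono {g m}) (mono (g ` (S - {m}))))" by (simp add: wedge_scale2)
    also have "\<dots> = qscale c (qscale (wsign {g m} (g ` (S - {m}))) (mono (insert (g m) (g ` (S - {m})))))"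
      using gm less.prems(1) by (simp add: mono_mult)
    also have "insert (g m) (g ` (S - {m})) = g ` S" using mS by auto
    also have "qscale c (qscale (wsign {g m} (g ` (S - {m}))) (mono (g ` S))) = qscale (c * wsign {g m} (g ` (S - {m}))) (mono (g ` S))"
      by (simp add: qscale_def fun_eq_iff)
    finally show ?thesis using c by (intro exI[of _ "c * wsign {g m} (g ` (S - {m}))"]) simp
  qed
qed


definition lp :: "nat \<Rightarrow> nat list set \<Rightarrow> bool" where
  "lp n P \<longleftrightarrow> (\<forall>xs\<in>P. xs \<noteq> [] \<and> distinct xs) \<and>
     (\<forall>xs\<in>P. \<forall>ys\<in>P. xs \<noteq> ys \<longrightarrow> set xs \<inter> set ys = {}) \<and>
     (\<Union>xs\<in>P. set xs) = {1..n} \<and> finite P"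

lemma lah_partitions_lp: "lah_partitions n m = {P. lp n P \<and> card P = m}"
  by (auto simp: lah_partitions_def lp_def)

definition ledges :: "nat list \<Rightarrow> gen set" where "ledges xs = set (zip xs (tl xs))"
definition edges :: "nat list set \<Rightarrow> gen set" where "edges P = (\<Union>xs\<in>P. ledges xs)"
definition Sing :: "nat list set \<Rightarrow> nat set" where "Sing P = {y. [y] \<in> P}"

lemma ledges_Nil[simp]: "ledges [] = {}" by (simp add: ledges_def)
lemma ledges_single[simp]: "ledges [a] = {}" by (simp add: ledges_def)
lemma ledges_Cons2[simp]: "ledges (a # b # xs) = insert (a, b) (ledges (b # xs))" by (simp add: ledges_def)

lemma ledges_append:
  "ledges (xs @ ys) = ledges xs \<union> ledges ys \<union> (if xs = [] \<or> ys = [] then {} else {(last xs, hd ys)})"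
proof (induction xs)
  case (Cons a xs)
  then show ?case
    by (cases xs; cases ys) auto
qed simp

lemma ledges_nth: "(a, b) \<in> ledges xs \<longleftrightarrow> (\<exists>t. Suc t < length xs \<and> a = xs ! t \<and> b = xs ! Suc t)"
proof
  assume "(a, b) \<in> ledges xs"
  then obtain i where "i < length xs - 1" "a = xs ! i" "b = tl xs ! i" by (auto simp: ledges_def set_zip)
  then show "\<exists>t. Suc t < length xs \<and> a = xs ! t \<and> b = xs ! Suc t" by (intro exI[of _ i]) (auto simp: nth_tl)
next
  assume "\<exists>t. Suc t < length xs \<and> a = xs ! t \<and> b = xs ! Suc t"
  then obtain t where "Suc t < length xs" "a = xs ! t" "b = xs ! Suc t" by blast
  then show "(a, b) \<in> ledges xs" unfolding ledges_def set_zip by (auto simp: nth_tl intro!: exI[of _ t])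
qed

lemma ledges_set: "(a, b) \<in> ledges xs \<Longrightarrow> a \<in> set xs \<and> b \<in> set xs"
  by (auto simp: ledges_nth)

lemma ledges_neq: "distinct xs \<Longrightarrow> (a, b) \<in> ledges xs \<Longrightarrow> a \<noteq> b"
  by (auto simp: ledges_nth nth_eq_iff_index_eq)

lemma finite_ledges[simp]: "finite (ledges xs)" by (simp add: ledges_def)

lemma card_ledges: "distinct xs \<Longrightarrow> card (ledges xs) = length xs - 1"
  unfolding ledges_def by (simp add: distinct_card distinct_zipI1)

lemma edges_insert: "edges (insert xs P) = ledges xs \<union> edges P" by (simp add: edges_def)
lemma edges_empty[simp]: "edges {} = {}" by (simp add: edges_def)

lemma lpD:
  assumes "lp n P"
  shows "\<And>xs. xs \<in> P \<Longrightarrow> xs \<noteq> []" "\<And>xs. xs \<in> P \<Longrightarrow> distinct xs"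
    "\<And>xs ys. xs \<in> P \<Longrightarrow> ys \<in> P \<Longrightarrow> xs \<noteq> ys \<Longrightarrow> set xs \<inter> set ys = {}"
    "(\<Union>xs\<in>P. set xs) = {1..n}" "finite P"
  using assms by (auto simp: lp_def)

lemma lp_same: "lp n P \<Longrightarrow> xs \<in> P \<Longrightarrow> ys \<in> P \<Longrightarrow> v \<in> set xs \<Longrightarrow> v \<in> set ys \<Longrightarrow> xs = ys"
  using lpD(3) by blast

lemma lp_cover: "lp n P \<Longrightarrow> v \<in> {1..n} \<Longrightarrow> \<exists>xs\<in>P. v \<in> set xs"
  using lpD(4) by blast

lemma lp_range: "lp n P \<Longrightarrow> xs \<in> P \<Longrightarrow> v \<in> set xs \<Longrightarrow> v \<in> {1..n}"
  using lpD(4) by blast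

lemma edges_in: "(a, b) \<in> edges P \<longleftrightarrow> (\<exists>xs\<in>P. (a, b) \<in> ledges xs)"
  by (simp add: edges_def)

lemma edges_gens: assumes "lp n P" shows "edges P \<subseteq> gens n"
proof
  fix e assume "e \<in> edges P"
  then obtain xs where e0: "xs \<in> P" "e \<in> ledges xs" by (auto simp: edges_def)
  obtain a b where "e = (a, b)" by (cases e)
  then have e: "e = (a, b)" "xs \<in> P" "(a, b) \<in> ledges xs" using e0 by auto
  then have "a \<in> {1..n}" "b \<in> {1..n}" "a \<noteq> b"
    using ledges_set[OF e(3)] lp_range[OF assms e(2)] ledges_neq[OF lpD(2)[OF assms e(2)] e(3)] by auto
  then show "e \<in> gens n" using e by (auto simp: gens_def)
qed

lemma finite_edges: "lp n P \<Longrightarrow> finite (edges P)"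
  using lpD(5) by (auto simp: edges_def)

lemma card_edges: assumes "lp n P" shows "card (edges P) + card P = n"
proof -
  have fin: "finite P" using lpD(5)[OF assms] .
  have disj: "\<forall>xs\<in>P. \<forall>ys\<in>P. xs \<noteq> ys \<longrightarrow> ledges xs \<inter> ledges ys = {}"
  proof (intro ballI impI)
    fix xs ys assume "xs \<in> P" "ys \<in> P" "xs \<noteq> ys"
    then have "set xs \<inter> set ys = {}" using lpD(3)[OF assms] by blast
    then show "ledges xs \<inter> ledges ys = {}" by (auto dest: ledges_set)
  qed
  have "card (edges P) = (\<Sum>xs\<in>P. card (ledges xs))"
    unfolding edges_def using fin disj by (intro card_UN_disjoint) auto
  also have "\<dots> = (\<Sum>xs\<in>P. length xs - 1)"
    using lpD(2)[OF assms] by (intro sum.cong) (auto simp: card_ledges)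
  finally have e1: "card (edges P) = (\<Sum>xs\<in>P. length xs - 1)" .
  have "n = card (\<Union>xs\<in>P. set xs)" using lpD(4)[OF assms] by simp
  also have "\<dots> = (\<Sum>xs\<in>P. card (set xs))"
    using fin lpD(3)[OF assms] by (intro card_UN_disjoint) auto
  also have "\<dots> = (\<Sum>xs\<in>P. (length xs - 1) + 1)"
    using lpD(1,2)[OF assms] by (intro sum.cong) (auto simp: distinct_card Suc_leI length_greater_0_conv)
  also have "\<dots> = (\<Sum>xs\<in>P. length xs - 1) + (\<Sum>xs\<in>P. 1)" by (rule sum.distrib)
  also have "\<dots> = (\<Sum>xs\<in>P. length xs - 1) + card P" by simp
  finally show ?thesis using e1 by simp
qed

lemma edge_same_list: "lp n P \<Longrightarrow> (a, b) \<in> edges P \<Longrightarrow> xs \<in> P \<Longrightarrow> a \<in> set xs \<Longrightarrow> (a, b) \<in> ledges xs"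
  by (auto simp: edges_def dest: ledges_set lp_same)

lemma lp_split:
  assumes P: "lp n P" and zs: "zs \<in> P" "zs = l1 @ l2" and ne: "l1 \<noteq> []" "l2 \<noteq> []"
  defines "P0 \<equiv> insert l1 (insert l2 (P - {zs}))"
  shows "lp n P0" "card P0 = Suc (card P)"
    "edges P = insert (last l1, hd l2) (edges P0)" "(last l1, hd l2) \<notin> edges P0"
    "Sing P \<subseteq> Sing P0"
proof -
  have dz: "distinct zs" using lpD(2)[OF P zs(1)] .
  have d12: "set l1 \<inter> set l2 = {}" "distinct l1" "distinct l2" using dz zs(2) by auto
  have other: "\<And>ys. ys \<in> P \<Longrightarrow> ys \<noteq> zs \<Longrightarrow> set ys \<inter> set zs = {}" using lpD(3)[OF P] zs(1) by blast
  have l1n: "l1 \<notin> P - {zs}"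
  proof
    assume "l1 \<in> P - {zs}" then have "set l1 \<inter> set zs = {}" using other by blast
    then show False using ne zs(2) by (cases l1) auto
  qed
  have l2n: "l2 \<notin> P - {zs}"
  proof
    assume "l2 \<in> P - {zs}" then have "set l2 \<inter> set zs = {}" using other by blast
    then show False using ne zs(2) by (cases l2) auto
  qed
  have l12: "l1 \<noteq> l2" using d12 ne by (cases l1) auto
  have fin: "finite P" using lpD(5)[OF P] .
  show "lp n P0" unfolding lp_def P0_def
  proof (intro conjI)
    show "\<forall>xs\<in>insert l1 (insert l2 (P - {zs})). xs \<noteq> [] \<and> distinct xs"
      using ne d12 lpD(1,2)[OF P] by auto
    show "\<forall>xs\<in>insert l1 (insert l2 (P - {zs})). \<forall>ys\<in>insert l1 (insert l2 (P - {zs})). xs \<noteq> ys \<longrightarrow> set xs \<inter> set ys = {}"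
    proof (intro ballI impI)
      fix as bs assume as: "as \<in> insert l1 (insert l2 (P - {zs}))" and bs: "bs \<in> insert l1 (insert l2 (P - {zs}))" and ne: "as \<noteq> bs"
      have o1: "\<And>cs. cs \<in> P - {zs} \<Longrightarrow> set cs \<inter> set l1 = {} \<and> set cs \<inter> set l2 = {}"
        using other zs(2) by auto
      show "set as \<inter> set bs = {}"
        using as bs ne o1 d12(1) lpD(3)[OF P] by (auto; blast)
    qed
    have "(\<Union>xs\<in>P. set xs) = set zs \<union> (\<Union>xs\<in>P - {zs}. set xs)" using zs(1) by blast
    then show "(\<Union>xs\<in>insert l1 (insert l2 (P - {zs})). set xs) = {1..n}"
      using lpD(4)[OF P] zs(2) by auto
    show "finite (insert l1 (insert l2 (P - {zs})))" using fin by simp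
  qed
  have c1: "card (P - {zs}) = card P - 1" using zs(1) fin by simp
  have c2: "card P \<ge> 1" using zs(1) fin card_gt_0_iff[of P] by auto
  show "card P0 = Suc (card P)" unfolding P0_def using fin l1n l2n l12 c1 c2 by simp
  have "edges P = ledges zs \<union> edges (P - {zs})" unfolding edges_def using zs(1) by blast
  then show "edges P = insert (last l1, hd l2) (edges P0)"
    unfolding P0_def edges_insert using zs(2) ne by (auto simp: ledges_append)
  show "(last l1, hd l2) \<notin> edges P0"
  proof
    assume "(last l1, hd l2) \<in> edges P0"
    then obtain ys where ys: "ys \<in> P0" "(last l1, hd l2) \<in> ledges ys" by (auto simp: edges_def)
    have a: "last l1 \<in> set l1" "hd l2 \<in> set l2" using ne by auto
    have "last l1 \<in> set ys" "hd l2 \<in> set ys" using ledges_set[OF ys(2)] by auto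
    then show False using ys(1) a d12 other zs(2) unfolding P0_def by auto
  qed
  show "Sing P \<subseteq> Sing P0"
  proof
    fix y assume "y \<in> Sing P"
    then have "[y] \<in> P" by (simp add: Sing_def)
    moreover have "[y] \<noteq> zs" using ne zs(2) by (cases l1) auto
    ultimately show "y \<in> Sing P0" by (simp add: Sing_def P0_def)
  qed
qed

lemma lp_join:
  assumes P: "lp n P" and xs: "xs \<in> P" and ys: "ys \<in> P" and ne: "xs \<noteq> ys"
  defines "P' \<equiv> insert (xs @ ys) (P - {xs, ys})"
  shows "lp n P'" "Suc (card P') = card P"
    "edges P' = insert (last xs, hd ys) (edges P)" "(last xs, hd ys) \<notin> edges P"
    "\<And>y. y \<in> Sing P \<Longrightarrow> y \<notin> set xs \<Longrightarrow> y \<notin> set ys \<Longrightarrow> y \<in> Sing P'"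
proof -
  have dxy: "set xs \<inter> set ys = {}" using lpD(3)[OF P xs ys ne] .
  have nexy: "xs \<noteq> []" "ys \<noteq> []" using lpD(1)[OF P] xs ys by auto
  have other: "\<And>zs. zs \<in> P \<Longrightarrow> zs \<noteq> xs \<Longrightarrow> zs \<noteq> ys \<Longrightarrow> set zs \<inter> (set xs \<union> set ys) = {}"
    using lpD(3)[OF P] xs ys by blast
  have fin: "finite P" using lpD(5)[OF P] .
  have nin: "xs @ ys \<notin> P - {xs, ys}"
  proof
    assume "xs @ ys \<in> P - {xs, ys}"
    then have "set (xs @ ys) \<inter> (set xs \<union> set ys) = {}" using other by blast
    then show False using nexy by (cases xs) auto
  qed
  show "lp n P'" unfolding lp_def P'_def
  proof (intro conjI)
    show "\<forall>zs\<in>insert (xs @ ys) (P - {xs, ys}). zs \<noteq> [] \<and> distinct zs"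
      using lpD(1,2)[OF P] xs ys dxy nexy by auto
    show "\<forall>as\<in>insert (xs @ ys) (P - {xs, ys}). \<forall>bs\<in>insert (xs @ ys) (P - {xs, ys}). as \<noteq> bs \<longrightarrow> set as \<inter> set bs = {}"
    proof (intro ballI impI)
      fix as bs assume as: "as \<in> insert (xs @ ys) (P - {xs, ys})" and bs: "bs \<in> insert (xs @ ys) (P - {xs, ys})" and ne: "as \<noteq> bs"
      have o1: "\<And>cs. cs \<in> P - {xs, ys} \<Longrightarrow> set cs \<inter> set (xs @ ys) = {}"
        using other by auto
      show "set as \<inter> set bs = {}"
        using as bs ne o1 lpD(3)[OF P] by (auto; blast)
    qed
    show "(\<Union>zs\<in>insert (xs @ ys) (P - {xs, ys}). set zs) = {1..n}"
      using lpD(4)[OF P] xs ys by auto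
    show "finite (insert (xs @ ys) (P - {xs, ys}))" using fin by simp
  qed
  have "card (P - {xs, ys}) = card P - 2" using fin xs ys ne
    by (simp add: card_Diff_subset)
  moreover have "card P \<ge> 2"
  proof -
    have "card {xs, ys} \<le> card P" using fin xs ys by (intro card_mono) auto
    then show ?thesis using ne by simp
  qed
  ultimately show "Suc (card P') = card P" unfolding P'_def using fin nin by simp
  have eP: "edges P = ledges xs \<union> ledges ys \<union> edges (P - {xs, ys})"
    unfolding edges_def using xs ys by blast
  show "edges P' = insert (last xs, hd ys) (edges P)"
    unfolding P'_def edges_insert eP using nexy by (auto simp: ledges_append)
  show "(last xs, hd ys) \<notin> edges P"
  proof
    assume "(last xs, hd ys) \<in> edges P"
    then obtain zs where zs: "zs \<in> P" "(last xs, hd ys) \<in> ledges zs" by (auto simp: edges_def)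
    have "last xs \<in> set zs" "hd ys \<in> set zs" using ledges_set[OF zs(2)] by auto
    moreover have "last xs \<in> set xs" "hd ys \<in> set ys" using nexy by auto
    ultimately have "zs = xs" "zs = ys" using lp_same[OF P] zs(1) xs ys by blast+
    then show False using ne by simp
  qed
  fix y assume "y \<in> Sing P" "y \<notin> set xs" "y \<notin> set ys"
  then show "y \<in> Sing P'" by (auto simp: Sing_def P'_def)
qed


section \<open>Linear extension of an ordered-product map\<close>

definition Lin :: "(gen \<Rightarrow> ext) \<Rightarrow> gen set \<Rightarrow> ext \<Rightarrow> ext" where
  "Lin x G f = (\<Sum>S\<in>Pow G. qscale (f S) (Pf x S))"

definition supp :: "gen set \<Rightarrow> ext \<Rightarrow> bool" where "supp G f \<longleftrightarrow> (\<forall>U. f U \<noteq> 0 \<longrightarrow> U \<subseteq> G)"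

lemma qscale_add_left: "qscale (a + b) h = qscale a h + qscale b h"
  by (simp add: qscale_def fun_eq_iff algebra_simps)
lemma qscale_zero_left[simp]: "qscale 0 h = 0" by (simp add: qscale_def fun_eq_iff)
lemma qscale_mult: "qscale a (qscale b h) = qscale (a * b) h" by (simp add: qscale_def fun_eq_iff)
lemma qscale_sum: "qscale c (\<Sum>i\<in>I. F i) = (\<Sum>i\<in>I. qscale c (F i))"
  using Q.scale_sum_right .

lemma Lin_add: "Lin x G (f + g) = Lin x G f + Lin x G g"
  by (simp add: Lin_def qscale_add_left sum.distrib)
lemma Lin_scale: "Lin x G (qscale c f) = qscale c (Lin x G f)"
  by (simp add: Lin_def qscale_sum qscale_mult)
lemma Lin_zero: "Lin x G 0 = 0" by (simp add: Lin_def)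
lemma Lin_diff: "Lin x G (f - g) = Lin x G f - Lin x G g"
proof -
  have "Lin x G (f - g) + Lin x G g = Lin x G f" by (simp flip: Lin_add)
  then show ?thesis by (simp add: algebra_simps)
qed
lemma Lin_sum: "Lin x G (\<Sum>i\<in>I. F i) = (\<Sum>i\<in>I. Lin x G (F i))"
proof (induction I rule: infinite_finite_induct)
  case (infinite A) thus ?case by (metis sum.infinite Lin_zero)
next case empty thus ?case by (metis sum.empty Lin_zero)
next case (insert y A) thus ?case by (metis sum.insert Lin_add)
qed

lemma Lin_mono: assumes "finite G" "S \<subseteq> G" shows "Lin x G (mono S) = Pf x S"
proof -
  have "Lin x G (mono S) = (\<Sum>T\<in>Pow G. if T = S then Pf x S else 0)"
    unfolding Lin_def by (rule sum.cong) (auto simp: mono_def)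
  also have "\<dots> = Pf x S" using assms by (simp add: sum.delta')
  finally show ?thesis .
qed

lemma sum_fun_apply: "(\<Sum>i\<in>I. F i) U = (\<Sum>i\<in>I. (F i) U)"
  by (induction I rule: infinite_finite_induct) auto

lemma expand: assumes "finite G" "supp G f" shows "f = (\<Sum>S\<in>Pow G. qscale (f S) (mono S))"
proof (rule ext)
  fix U
  have "(\<Sum>S\<in>Pow G. qscale (f S) (mono S)) U = (\<Sum>S\<in>Pow G. if S = U then f U else 0)"
    by (simp add: sum_fun_apply) (rule sum.cong, auto simp: mono_def)
  also have "\<dots> = f U" using assms by (auto simp: sum.delta' supp_def)
  finally show "f U = (\<Sum>S\<in>Pow G. qscale (f S) (mono S)) U" by simp
qed

lemma supp_wedge: "supp G f \<Longrightarrow> supp G g \<Longrightarrow> supp G (wedge f g)"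
proof -
  assume a: "supp G f" "supp G g"
  show "supp G (wedge f g)" unfolding supp_def
  proof (intro allI impI)
    fix U assume "wedge f g U \<noteq> 0"
    then obtain S where "S \<subseteq> U" "f S \<noteq> 0" "g (U - S) \<noteq> 0" unfolding wedge_def
      by (metis (no_types, lifting) PowD mult_not_zero sum.neutral)
    then show "U \<subseteq> G" using a unfolding supp_def by blast
  qed
qed

lemma supp_mono: "S \<subseteq> G \<Longrightarrow> supp G (mono S)" by (auto simp: supp_def mono_def)
lemma supp_diff: assumes "supp G f" "supp G g" shows "supp G (f - g)"
  unfolding supp_def
proof (intro allI impI)
  fix U assume "(f - g) U \<noteq> 0" then have "f U \<noteq> 0 \<or> g U \<noteq> 0" by auto
  then show "U \<subseteq> G" using assms unfolding supp_def by blast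
qed
lemma supp_add: assumes "supp G f" "supp G g" shows "supp G (f + g)"
  unfolding supp_def
proof (intro allI impI)
  fix U assume "(f + g) U \<noteq> 0" then have "f U \<noteq> 0 \<or> g U \<noteq> 0" by auto
  then show "U \<subseteq> G" using assms unfolding supp_def by blast
qed
lemma supp_scale: "supp G f \<Longrightarrow> supp G (qscale c f)" by (auto simp: supp_def)

lemma Lin_mult:
  assumes G: "finite G" and d: "\<And>e. deg1 (x e)" and f: "supp G f" and g: "supp G g"
  shows "Lin x G (wedge f g) = wedge (Lin x G f) (Lin x G g)"
proof -
  have key: "Lin x G (wedge (mono S) (mono T)) = wedge (Pf x S) (Pf x T)" if "S \<subseteq> G" "T \<subseteq> G" for S T
  proof -
    have fin: "finite S" "finite T" using that G finite_subset by auto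
    show ?thesis
      using that G fin by (simp add: mono_mult Pf_mult[OF d] Lin_scale Lin_mono Lin_zero)
  qed
  have "wedge f g = wedge (\<Sum>S\<in>Pow G. qscale (f S) (mono S)) (\<Sum>T\<in>Pow G. qscale (g T) (mono T))"
    using expand[OF G f] expand[OF G g] by simp
  also have "\<dots> = (\<Sum>S\<in>Pow G. \<Sum>T\<in>Pow G. qscale (f S * g T) (wedge (mono S) (mono T)))"
    by (simp add: wedge_sum1 wedge_sum2 wedge_scale1 wedge_scale2 qscale_sum qscale_mult mult.commute)
       (rule sum.swap)
  finally have "Lin x G (wedge f g) = (\<Sum>S\<in>Pow G. \<Sum>T\<in>Pow G. qscale (f S * g T) (wedge (Pf x S) (Pf x T)))"
    by (simp add: Lin_sum Lin_scale key)
  also have "\<dots> = wedge (\<Sum>S\<in>Pow G. qscale (f S) (Pf x S)) (\<Sum>T\<in>Pow G. qscale (g T) (Pf x T))"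
    by (simp add: wedge_sum1 wedge_sum2 wedge_scale1 wedge_scale2 qscale_sum qscale_mult mult.commute)
       (rule sum.swap)
  finally show ?thesis by (simp add: Lin_def)
qed

lemma Pf_single: "deg1 (x e) \<Longrightarrow> Pf x {e} = x e"
  by (simp add: Pf_Min wedge_unit2 deg1_fs)

lemma Lin_r: "finite G \<Longrightarrow> (i, j) \<in> G \<Longrightarrow> deg1 (x (i, j)) \<Longrightarrow> Lin x G (r i j) = x (i, j)"
  by (simp add: r_def Lin_mono Pf_single)

lemma Lin_rr:
  assumes "finite G" "(i, j) \<in> G" "(k, l) \<in> G" "\<And>e. deg1 (x e)"
  shows "Lin x G (wedge (r i j) (r k l)) = wedge (x (i, j)) (x (k, l))"
  using assms by (simp add: Lin_mult supp_mono r_def Lin_r[unfolded r_def])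


section \<open>The model attached to a Lah partition\<close>

definition qlist :: "nat list set \<Rightarrow> nat list list" where "qlist Q = (SOME qs. set qs = Q \<and> distinct qs)"
definition zq :: "nat list set \<Rightarrow> nat list" where "zq Q = concat (qlist Q)"
definition rho :: "nat list set \<Rightarrow> nat \<Rightarrow> nat" where "rho Q v = (THE t. t < length (zq Q) \<and> zq Q ! t = v)"
definition fw :: "nat list set \<Rightarrow> nat \<Rightarrow> nat \<Rightarrow> bool" where
  "fw Q i j \<longleftrightarrow> (\<exists>xs\<in>Q. i \<in> set xs \<and> j \<in> set xs \<and> rho Q i < rho Q j)"
definition Dm :: "nat list set \<Rightarrow> nat \<Rightarrow> nat \<Rightarrow> ext" where
  "Dm Q i j = (\<Sum>t\<in>{rho Q i..<rho Q j}. mono {(t, 0)})"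
definition xm :: "nat list set \<Rightarrow> gen \<Rightarrow> ext" where
  "xm Q e = (if fw Q (fst e) (snd e) then Dm Q (fst e) (snd e) else 0)"

lemma qlist: assumes "lp n Q" shows "set (qlist Q) = Q" "distinct (qlist Q)"
proof -
  have "\<exists>qs. set qs = Q \<and> distinct qs" using finite_distinct_list lpD(5)[OF assms] by blast
  then have "set (qlist Q) = Q \<and> distinct (qlist Q)" unfolding qlist_def by (rule someI_ex)
  then show "set (qlist Q) = Q" "distinct (qlist Q)" by auto
qed

lemma zq_distinct: "lp n Q \<Longrightarrow> distinct (zq Q)"
  unfolding zq_def by (rule distinct_concat) (use qlist lpD in auto)

lemma zq_set: "lp n Q \<Longrightarrow> set (zq Q) = {1..n}"
  unfolding zq_def using qlist lpD(4) by auto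

lemma zq_contig: assumes "lp n Q" "xs \<in> Q" shows "\<exists>pre post. zq Q = pre @ xs @ post"
proof -
  have "xs \<in> set (qlist Q)" using qlist(1)[OF assms(1)] assms(2) by simp
  then obtain q1 q2 where "qlist Q = q1 @ xs # q2" by (meson split_list)
  then show ?thesis unfolding zq_def by auto
qed

lemma rho_nth: assumes "lp n Q" "t < length (zq Q)" shows "rho Q (zq Q ! t) = t"
  unfolding rho_def
  by (rule the_equality) (use assms zq_distinct[OF assms(1)] nth_eq_iff_index_eq in auto)

lemma rho_inj: assumes "lp n Q" "i \<in> {1..n}" "j \<in> {1..n}" "rho Q i = rho Q j" shows "i = j"
proof -
  obtain a where a: "a < length (zq Q)" "zq Q ! a = i" using assms(2) zq_set[OF assms(1)] by (metis in_set_conv_nth)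
  obtain b where b: "b < length (zq Q)" "zq Q ! b = j" using assms(3) zq_set[OF assms(1)] by (metis in_set_conv_nth)
  have "a = b" using rho_nth[OF assms(1) a(1)] rho_nth[OF assms(1) b(1)] a b assms(4) by simp
  then show ?thesis using a b by simp
qed

lemma rho_block: assumes "lp n Q" "xs \<in> Q" shows "\<exists>p. \<forall>t<length xs. rho Q (xs ! t) = p + t"
proof -
  obtain pre post where z: "zq Q = pre @ xs @ post" using zq_contig[OF assms] by blast
  have "rho Q (xs ! t) = length pre + t" if "t < length xs" for t
  proof -
    have "zq Q ! (length pre + t) = xs ! t" using z that by (simp add: nth_append)
    moreover have "length pre + t < length (zq Q)" using z that by simp
    ultimately show ?thesis using rho_nth[OF assms(1)] by metis
  qed
  then show ?thesis by blast
qed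

lemma deg1_Dm: "deg1 (Dm Q i j)" unfolding Dm_def by (rule deg1_sum) simp
lemma deg1_xm: "deg1 (xm Q e)" by (simp add: xm_def deg1_Dm)

lemma Dm_split: "rho Q i \<le> rho Q j \<Longrightarrow> rho Q j \<le> rho Q k \<Longrightarrow> Dm Q i k = Dm Q i j + Dm Q j k"
  unfolding Dm_def by (simp add: sum.atLeastLessThan_concat)

lemma gensI: "i \<in> {1..n} \<Longrightarrow> j \<in> {1..n} \<Longrightarrow> i \<noteq> j \<Longrightarrow> (i, j) \<in> gens n"
  by (auto simp: gens_def)

lemma finite_gens: "finite (gens n)"
  by (rule finite_subset[of _ "{1..n} \<times> {1..n}"]) (auto simp: gens_def)

context
  fixes n Q assumes Q: "lp n Q"
begin

lemma fw_range: "fw Q i j \<Longrightarrow> i \<in> {1..n} \<and> j \<in> {1..n}"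
  unfolding fw_def using lp_range[OF Q] by blast

lemma fw_trans: "fw Q i j \<Longrightarrow> fw Q j k \<Longrightarrow> fw Q i k"
  unfolding fw_def using lp_same[OF Q] by (metis less_trans)

lemma fw_asym: "fw Q i j \<Longrightarrow> \<not> fw Q j i"
  unfolding fw_def by auto

lemma fw_src: "fw Q i j \<Longrightarrow> fw Q i k \<Longrightarrow> j \<noteq> k \<Longrightarrow> fw Q j k \<or> fw Q k j"
proof -
  assume a: "fw Q i j" "fw Q i k" "j \<noteq> k"
  then obtain xs ys where xs: "xs \<in> Q" "i \<in> set xs" "j \<in> set xs" and ys: "ys \<in> Q" "i \<in> set ys" "k \<in> set ys"
    unfolding fw_def by blast
  have "xs = ys" using lp_same[OF Q xs(1) ys(1) xs(2) ys(2)] .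
  moreover have "rho Q j \<noteq> rho Q k" using rho_inj[OF Q] fw_range a by blast
  ultimately show ?thesis using xs ys unfolding fw_def by (metis linorder_neqE_nat)
qed

lemma fw_tgt: "fw Q i k \<Longrightarrow> fw Q j k \<Longrightarrow> i \<noteq> j \<Longrightarrow> fw Q i j \<or> fw Q j i"
proof -
  assume a: "fw Q i k" "fw Q j k" "i \<noteq> j"
  then obtain xs ys where xs: "xs \<in> Q" "i \<in> set xs" "k \<in> set xs" and ys: "ys \<in> Q" "j \<in> set ys" "k \<in> set ys"
    unfolding fw_def by blast
  have "xs = ys" using lp_same[OF Q xs(1) ys(1) xs(3) ys(3)] .
  moreover have "rho Q i \<noteq> rho Q j" using rho_inj[OF Q] fw_range a by blast
  ultimately show ?thesis using xs ys unfolding fw_def by (metis linorder_neqE_nat)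
qed

lemma fw_rho: "fw Q i j \<Longrightarrow> rho Q i < rho Q j" unfolding fw_def by blast


lemma xm_fw: "fw Q i j \<Longrightarrow> xm Q (i, j) = Dm Q i j" by (simp add: xm_def)
lemma xm_nfw: "\<not> fw Q i j \<Longrightarrow> xm Q (i, j) = 0" by (simp add: xm_def)

lemma model_rel1:
  assumes "j \<noteq> k"
  shows "wedge (xm Q (i, j)) (xm Q (i, k)) - (wedge (xm Q (i, j)) (xm Q (j, k)) - wedge (xm Q (i, k)) (xm Q (k, j))) = 0"
proof -
  note ac = deg1_anticomm[OF deg1_Dm deg1_Dm] and sq = deg1_sq[OF deg1_Dm]
  consider "fw Q i j \<and> fw Q j k" | "fw Q i k \<and> fw Q k j" | "\<not> (fw Q i j \<and> fw Q j k)" "\<not> (fw Q i k \<and> fw Q k j)" by blast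
  then show ?thesis
  proof cases
    case 1
    then have ik: "fw Q i k" and kj: "\<not> fw Q k j" using fw_trans fw_asym by blast+
    have D: "Dm Q i k = Dm Q i j + Dm Q j k" using 1 by (intro Dm_split) (auto dest: fw_rho)
    show ?thesis using 1 ik kj by (simp add: xm_fw xm_nfw D wedge_add2 sq)
  next
    case 2
    then have ij: "fw Q i j" and jk: "\<not> fw Q j k" using fw_trans fw_asym by blast+
    have D: "Dm Q i j = Dm Q i k + Dm Q k j" using 2 by (intro Dm_split) (auto dest: fw_rho)
    have "wedge (Dm Q k j) (Dm Q i k) = - wedge (Dm Q i k) (Dm Q k j)" by (rule ac)
    then show ?thesis using 2 ij jk by (simp add: xm_fw xm_nfw D wedge_add1 sq)
  next
    case 3
    have "\<not> (fw Q i j \<and> fw Q i k)" using 3 fw_src assms by blast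
    then have "wedge (xm Q (i, j)) (xm Q (i, k)) = 0" by (auto simp: xm_nfw)
    moreover have "wedge (xm Q (i, j)) (xm Q (j, k)) = 0" using 3 by (auto simp: xm_nfw)
    moreover have "wedge (xm Q (i, k)) (xm Q (k, j)) = 0" using 3 by (auto simp: xm_nfw)
    ultimately show ?thesis by simp
  qed
qed

lemma model_rel2:
  assumes "i \<noteq> j"
  shows "wedge (xm Q (i, k)) (xm Q (j, k)) - (wedge (xm Q (i, j)) (xm Q (j, k)) - wedge (xm Q (j, i)) (xm Q (i, k))) = 0"
proof -
  note ac = deg1_anticomm[OF deg1_Dm deg1_Dm] and sq = deg1_sq[OF deg1_Dm]
  consider "fw Q i j \<and> fw Q j k" | "fw Q j i \<and> fw Q i k" | "\<not> (fw Q i j \<and> fw Q j k)" "\<not> (fw Q j i \<and> fw Q i k)" by blast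
  then show ?thesis
  proof cases
    case 1
    then have ik: "fw Q i k" and ji: "\<not> fw Q j i" using fw_trans fw_asym by blast+
    have D: "Dm Q i k = Dm Q i j + Dm Q j k" using 1 by (intro Dm_split) (auto dest: fw_rho)
    show ?thesis using 1 ik ji by (simp add: xm_fw xm_nfw D wedge_add1 sq)
  next
    case 2
    then have jk: "fw Q j k" and ij: "\<not> fw Q i j" using fw_trans fw_asym by blast+
    have D: "Dm Q j k = Dm Q j i + Dm Q i k" using 2 by (intro Dm_split) (auto dest: fw_rho)
    have "wedge (Dm Q i k) (Dm Q j i) = - wedge (Dm Q j i) (Dm Q i k)" by (rule ac)
    then show ?thesis using 2 jk ij by (simp add: xm_fw xm_nfw D wedge_add2 sq)
  next
    case 3
    have "\<not> (fw Q i k \<and> fw Q j k)" using 3 fw_tgt assms by blast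
    then have "wedge (xm Q (i, k)) (xm Q (j, k)) = 0" by (auto simp: xm_nfw)
    moreover have "wedge (xm Q (i, j)) (xm Q (j, k)) = 0" using 3 by (auto simp: xm_nfw)
    moreover have "wedge (xm Q (j, i)) (xm Q (i, k)) = 0" using 3 by (auto simp: xm_nfw)
    ultimately show ?thesis by simp
  qed
qed

lemma model_rel3: "wedge (xm Q (i, j)) (xm Q (j, i)) = 0"
  using fw_asym by (cases "fw Q i j") (auto simp: xm_nfw)


lemma LR: "i \<in> {1..n} \<Longrightarrow> j \<in> {1..n} \<Longrightarrow> k \<in> {1..n} \<Longrightarrow> l \<in> {1..n} \<Longrightarrow> i \<noteq> j \<Longrightarrow> k \<noteq> l \<Longrightarrow>
  Lin (xm Q) (gens n) (wedge (r i j) (r k l)) = wedge (xm Q (i, j)) (xm Q (k, l))"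
  by (rule Lin_rr[OF finite_gens gensI gensI deg1_xm])

lemma Lin_rels: assumes "q \<in> rels n" shows "Lin (xm Q) (gens n) q = 0"
proof -
  from assms show ?thesis unfolding rels_def
  proof (elim UnE CollectE exE conjE)
    fix i j k assume q: "q = wedge (r i j) (r i k) - (wedge (r i j) (r j k) - wedge (r i k) (r k j))"
      and h: "i \<in> {1..n}" "j \<in> {1..n}" "k \<in> {1..n}" "i \<noteq> j" "i \<noteq> k" "j \<noteq> k"
    have a: "Lin (xm Q) (gens n) (wedge (r i j) (r i k)) = wedge (xm Q (i, j)) (xm Q (i, k))" by (rule LR) (use h in auto)
    have b: "Lin (xm Q) (gens n) (wedge (r i j) (r j k)) = wedge (xm Q (i, j)) (xm Q (j, k))" by (rule LR) (use h in auto)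
    have c: "Lin (xm Q) (gens n) (wedge (r i k) (r k j)) = wedge (xm Q (i, k)) (xm Q (k, j))" by (rule LR) (use h in auto)
    show ?thesis unfolding q Lin_diff a b c by (rule model_rel1) (use h in auto)
  next
    fix i j k assume q: "q = wedge (r i k) (r j k) - (wedge (r i j) (r j k) - wedge (r j i) (r i k))"
      and h: "i \<in> {1..n}" "j \<in> {1..n}" "k \<in> {1..n}" "i \<noteq> j" "i \<noteq> k" "j \<noteq> k"
    have a: "Lin (xm Q) (gens n) (wedge (r i k) (r j k)) = wedge (xm Q (i, k)) (xm Q (j, k))" by (rule LR) (use h in auto)
    have b: "Lin (xm Q) (gens n) (wedge (r i j) (r j k)) = wedge (xm Q (i, j)) (xm Q (j, k))" by (rule LR) (use h in auto)
    have c: "Lin (xm Q) (gens n) (wedge (r j i) (r i k)) = wedge (xm Q (j, i)) (xm Q (i, k))" by (rule LR) (use h in auto)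
    show ?thesis unfolding q Lin_diff a b c by (rule model_rel2) (use h in auto)
  next
    fix i j assume q: "q = wedge (r i j) (r j i)" and h: "i \<in> {1..n}" "j \<in> {1..n}" "i \<noteq> j"
    have a: "Lin (xm Q) (gens n) (wedge (r i j) (r j i)) = wedge (xm Q (i, j)) (xm Q (j, i))" by (rule LR) (use h in auto)
    show ?thesis unfolding q a by (rule model_rel3)
  qed
qed

end


lemma supp_r: "(i, j) \<in> G \<Longrightarrow> supp G (r i j)" by (simp add: r_def supp_mono)

lemma supp_rels: assumes "q \<in> rels n" shows "supp (gens n) q"
  using assms unfolding rels_def
  by (auto intro!: supp_diff supp_wedge supp_r simp: gens_def)

lemma Lin_ideal_gen:
  assumes Q: "lp n Q" and A: "A \<subseteq> gens n" and B: "B \<subseteq> gens n" and q: "q \<in> rels n"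
  shows "Lin (xm Q) (gens n) (wedge (wedge (mono A) q) (mono B)) = 0"
proof -
  have s: "supp (gens n) (mono A)" "supp (gens n) (mono B)" "supp (gens n) q"
    using A B supp_mono supp_rels[OF q] by auto
  show ?thesis
    using Lin_rels[OF Q q] s
    by (simp add: Lin_mult[OF finite_gens deg1_xm] supp_wedge)
qed

lemma Lin_ideal: assumes Q: "lp n Q" and f: "f \<in> ideal_deg n k" shows "Lin (xm Q) (gens n) f = 0"
  using f unfolding ideal_deg_def
proof (induction rule: Q.span_induct)
  case base
  show ?case by (auto simp: Q.subspace_def Lin_zero Lin_add Lin_scale)
next
  case (step x)
  then show ?case using Lin_ideal_gen[OF Q] by blast
qed

lemma succ_unique: assumes P: "lp n P" "(a, b) \<in> edges P" "(a, b') \<in> edges P" shows "b = b'"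
proof -
  obtain xs where xs: "xs \<in> P" "(a, b) \<in> ledges xs" using assms(2) by (auto simp: edges_def)
  obtain ys where ys: "ys \<in> P" "(a, b') \<in> ledges ys" using assms(3) by (auto simp: edges_def)
  have "xs = ys" using lp_same[OF P(1) xs(1) ys(1)] ledges_set xs(2) ys(2) by blast
  then obtain s t where st: "Suc s < length xs" "a = xs ! s" "b = xs ! Suc s"
      "Suc t < length xs" "a = xs ! t" "b' = xs ! Suc t"
    using xs(2) ys(2) by (auto simp: ledges_nth)
  have "s = t" using st lpD(2)[OF P(1) xs(1)] nth_eq_iff_index_eq by (metis Suc_lessD)
  then show ?thesis using st by simp
qed

lemma xm_own_edge: assumes Q: "lp n Q" and e: "e \<in> edges Q" shows "xm Q e = mono {(rho Q (fst e), 0)}"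
proof -
  obtain xs where xs: "xs \<in> Q" "e \<in> ledges xs" using e by (auto simp: edges_def)
  obtain a b where ab: "e = (a, b)" by (cases e)
  then obtain t where t: "Suc t < length xs" "a = xs ! t" "b = xs ! Suc t" using xs(2) by (auto simp: ledges_nth)
  obtain p where p: "\<forall>t<length xs. rho Q (xs ! t) = p + t" using rho_block[OF Q xs(1)] by blast
  have ra: "rho Q a = p + t" and rb: "rho Q b = Suc (p + t)" using p t by auto
  have "fw Q a b" unfolding fw_def using xs(1) t ra rb by (intro bexI[of _ xs]) auto
  then show ?thesis using ab ra rb by (simp add: xm_def Dm_def)
qed

lemma Lin_own_nonzero: assumes Q: "lp n Q" shows "Lin (xm Q) (gens n) (mono (edges Q)) \<noteq> 0"
proof -
  have fin: "finite (edges Q)" using finite_edges[OF Q] .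
  have inj: "inj_on (\<lambda>e. (rho Q (fst e), 0::nat)) (edges Q)"
  proof (rule inj_onI)
    fix e1 e2 assume e: "e1 \<in> edges Q" "e2 \<in> edges Q" "(rho Q (fst e1), 0::nat) = (rho Q (fst e2), 0)"
    obtain a b where ab: "e1 = (a, b)" by (cases e1)
    obtain a' b' where ab': "e2 = (a', b')" by (cases e2)
    have g1: "(a, b) \<in> gens n" using edges_gens[OF Q] e(1) ab by blast
    have g2: "(a', b') \<in> gens n" using edges_gens[OF Q] e(2) ab' by blast
    have ha: "a \<in> {1..n}" using g1 by (simp add: gens_def)
    have ha': "a' \<in> {1..n}" using g2 by (simp add: gens_def)
    have "rho Q a = rho Q a'" using e(3) ab ab' by simp
    then have aa: "a = a'" using rho_inj[OF Q ha ha'] by simp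
    have e1': "(a, b) \<in> edges Q" using e(1) ab by simp
    have e2': "(a, b') \<in> edges Q" using e(2) ab' aa by simp
    have "b = b'" using succ_unique[OF Q e1' e2'] .
    then show "e1 = e2" using ab ab' aa by simp
  qed
  have "\<exists>c. c \<noteq> 0 \<and> Pf (xm Q) (edges Q) = qscale c (mono ((\<lambda>e. (rho Q (fst e), 0::nat)) ` edges Q))"
    by (rule Pf_nonzero[OF fin inj]) (rule xm_own_edge[OF Q])
  then obtain c where c: "c \<noteq> 0" "Pf (xm Q) (edges Q) = qscale c (mono ((\<lambda>e. (rho Q (fst e), 0::nat)) ` edges Q))"
    by blast
  define T where "T = (\<lambda>e. (rho Q (fst e), 0::nat)) ` edges Q"
  have h: "Pf (xm Q) (edges Q) T = c" using c(2) by (simp add: T_def mono_def)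
  have "Pf (xm Q) (edges Q) \<noteq> 0"
  proof
    assume "Pf (xm Q) (edges Q) = 0"
    then have "Pf (xm Q) (edges Q) T = 0" by simp
    then show False using h c(1) by simp
  qed
  then show ?thesis using Lin_mono[OF finite_gens edges_gens[OF Q]] by simp
qed

definition blk :: "nat list set \<Rightarrow> nat \<Rightarrow> nat list" where "blk Q v = (THE xs. xs \<in> Q \<and> v \<in> set xs)"

lemma blk: assumes "lp n Q" "v \<in> {1..n}" shows "blk Q v \<in> Q" "v \<in> set (blk Q v)"
proof -
  have "\<exists>!xs. xs \<in> Q \<and> v \<in> set xs" using lp_cover[OF assms] lp_same[OF assms(1)] by blast
  then have "blk Q v \<in> Q \<and> v \<in> set (blk Q v)" unfolding blk_def by (rule theI')
  then show "blk Q v \<in> Q" "v \<in> set (blk Q v)" by auto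
qed

lemma uniqueness:
  assumes P: "lp n P" and Q: "lp n Q" and card: "card P = card Q"
    and fwd: "\<And>a b. (a, b) \<in> edges P \<Longrightarrow> fw Q a b"
  shows "P = Q"
proof -
  define phi :: "nat list \<Rightarrow> nat list" where "phi ys = blk Q (hd ys)" for ys
  have hdn: "hd ys \<in> {1..n}" if "ys \<in> P" for ys
    using lp_range[OF P that] lpD(1)[OF P that] by simp
  have cons: "fw Q (ys ! t) (ys ! Suc t)" if "ys \<in> P" "Suc t < length ys" for ys t
    using fwd that by (auto simp: edges_def ledges_nth)
  have sub: "set ys \<subseteq> set (phi ys)" if ys: "ys \<in> P" for ys
  proof -
    have "ys ! t \<in> set (phi ys)" if "t < length ys" for t
      using that
    proof (induction t)
      case 0
      then show ?case using blk[OF Q hdn[OF ys]] lpD(1)[OF P ys] by (simp add: phi_def hd_conv_nth)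
    next
      case (Suc t)
      have f: "fw Q (ys ! t) (ys ! Suc t)" using cons[OF ys Suc.prems] .
      then obtain xs where xs: "xs \<in> Q" "ys ! t \<in> set xs" "ys ! Suc t \<in> set xs" unfolding fw_def by blast
      have "xs = phi ys" using lp_same[OF Q xs(1) _ xs(2)] Suc blk(1)[OF Q hdn[OF ys]] by (simp add: phi_def)
      then show ?case using xs by simp
    qed
    then show ?thesis by (auto simp: in_set_conv_nth)
  qed
  have phiQ: "phi ys \<in> Q" if "ys \<in> P" for ys using blk(1)[OF Q hdn[OF that]] by (simp add: phi_def)
  have img: "phi ` P = Q"
  proof
    show "phi ` P \<subseteq> Q" using phiQ by auto
    show "Q \<subseteq> phi ` P"
    proof
      fix xs assume xs: "xs \<in> Q"
      have v: "hd xs \<in> set xs" using lpD(1)[OF Q xs] by simp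
      then have "hd xs \<in> {1..n}" using lp_range[OF Q xs] by blast
      then obtain ys where ys: "ys \<in> P" "hd xs \<in> set ys" using lp_cover[OF P] by blast
      then have "hd xs \<in> set (phi ys)" using sub by blast
      then have "phi ys = xs" using lp_same[OF Q phiQ[OF ys(1)] xs _ v] by simp
      then show "xs \<in> phi ` P" using ys by blast
    qed
  qed
  have inj: "inj_on phi P"
    using lpD(5)[OF P] img card by (simp add: eq_card_imp_inj_on)
  have seteq: "set ys = set (phi ys)" if ys: "ys \<in> P" for ys
  proof
    show "set ys \<subseteq> set (phi ys)" using sub[OF ys] .
    show "set (phi ys) \<subseteq> set ys"
    proof
      fix v assume v: "v \<in> set (phi ys)"
      then have "v \<in> {1..n}" using lp_range[OF Q phiQ[OF ys]] by blast
      then obtain ys' where ys': "ys' \<in> P" "v \<in> set ys'" using lp_cover[OF P] by blast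
      have "phi ys' = phi ys" using lp_same[OF Q phiQ[OF ys'(1)] phiQ[OF ys]] sub[OF ys'(1)] ys'(2) v by blast
      then have "ys' = ys" using inj ys ys'(1) by (simp add: inj_on_eq_iff)
      then show "v \<in> set ys" using ys' by simp
    qed
  qed
  have eq: "phi ys = ys" if ys: "ys \<in> P" for ys
  proof -
    define xs where "xs = phi ys"
    have xsQ: "xs \<in> Q" using phiQ[OF ys] xs_def by simp
    obtain p where p: "\<forall>t<length xs. rho Q (xs ! t) = p + t" using rho_block[OF Q xsQ] by blast
    have s1: "sorted_wrt (<) (map (rho Q) ys)"
      by (subst sorted_wrt_iff_nth_Suc_transp) (auto intro: transpI simp: fw_rho[OF Q] cons[OF ys])
    have s2: "sorted_wrt (<) (map (rho Q) xs)"
      by (subst sorted_wrt_iff_nth_Suc_transp) (auto intro: transpI simp: p)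
    have "set (map (rho Q) ys) = set (map (rho Q) xs)" using seteq[OF ys] xs_def by simp
    then have "map (rho Q) ys = map (rho Q) xs" using s1 s2 by (simp add: strict_sorted_iff sorted_distinct_set_unique)
    moreover have "inj_on (rho Q) (set ys \<union> set xs)"
      using rho_inj[OF Q] lp_range[OF P ys] lp_range[OF Q xsQ] by (auto intro!: inj_onI)
    ultimately have "ys = xs" using inj_on_map_eq_map by blast
    then show ?thesis using xs_def by simp
  qed
  have "phi ` P = P" using eq by (auto simp: image_iff)
  then show ?thesis using img by simp
qed

lemma Lin_other_zero:
  assumes P: "lp n P" and Q: "lp n Q" and card: "card P = card Q" and ne: "P \<noteq> Q"
  shows "Lin (xm Q) (gens n) (mono (edges P)) = 0"
proof -
  obtain a b where ab: "(a, b) \<in> edges P" "\<not> fw Q a b" using uniqueness[OF P Q card] ne by blast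
  have "xm Q (a, b) = 0" using ab(2) by (simp add: xm_def)
  then have "Pf (xm Q) (edges P) = 0" using Pf_zero[OF finite_edges[OF P] ab(1)] by simp
  then show ?thesis using Lin_mono[OF finite_gens edges_gens[OF P]] by simp
qed


lemma r_mono: "r a b = mono {(a, b)}" by (simp add: r_def)

lemma pair_term:
  assumes "finite A"
  shows "\<exists>c. wedge (mono A) (wedge (r a b) (r a' b')) = qscale c (mono (insert (a, b) (insert (a', b') A)))
           \<and> (c \<noteq> 0 \<longleftrightarrow> ((a, b) \<noteq> (a', b') \<and> (a, b) \<notin> A \<and> (a', b') \<notin> A))"
proof (cases "(a, b) \<noteq> (a', b') \<and> (a, b) \<notin> A \<and> (a', b') \<notin> A")
  case True
  have e: "A \<union> {(a, b), (a', b')} = insert (a, b) (insert (a', b') A)" by auto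
  have "wedge (mono A) (wedge (r a b) (r a' b')) =
      qscale (wsign {(a, b)} {(a', b')} * wsign A {(a, b), (a', b')}) (mono (insert (a, b) (insert (a', b') A)))"
    using True assms by (simp add: r_mono mono_mult wedge_scale2 qscale_mult e insert_commute mult.commute)
  then show ?thesis using True by (intro exI[of _ "wsign {(a, b)} {(a', b')} * wsign A {(a, b), (a', b')}"]) simp
next
  case False
  then have "wedge (mono A) (wedge (r a b) (r a' b')) = 0"
    using assms by (auto simp: r_mono mono_mult wedge_scale2)
  then show ?thesis using False by (intro exI[of _ 0]) simp
qed

lemma ideal_genI:
  assumes "A \<subseteq> gens n" "q \<in> rels n" "card A + 2 = k"
  shows "wedge (mono A) q \<in> ideal_deg n k"
proof -
  have "wedge (wedge (mono A) q) (mono {}) = wedge (mono A) q" by (simp add: wedge_unit2)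
  moreover have "wedge (wedge (mono A) q) (mono {}) \<in> ideal_deg n k"
    unfolding ideal_deg_def by (rule Q.span_base) (use assms in force)
  ultimately show ?thesis by simp
qed

lemma rel1_in: "i \<in> {1..n} \<Longrightarrow> j \<in> {1..n} \<Longrightarrow> k \<in> {1..n} \<Longrightarrow> i \<noteq> j \<Longrightarrow> i \<noteq> k \<Longrightarrow> j \<noteq> k \<Longrightarrow>
  wedge (r i j) (r i k) - (wedge (r i j) (r j k) - wedge (r i k) (r k j)) \<in> rels n"
  unfolding rels_def by blast

lemma rel2_in: "i \<in> {1..n} \<Longrightarrow> j \<in> {1..n} \<Longrightarrow> k \<in> {1..n} \<Longrightarrow> i \<noteq> j \<Longrightarrow> i \<noteq> k \<Longrightarrow> j \<noteq> k \<Longrightarrow>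
  wedge (r i k) (r j k) - (wedge (r i j) (r j k) - wedge (r j i) (r i k)) \<in> rels n"
  unfolding rels_def by blast

lemma rel3_in: "i \<in> {1..n} \<Longrightarrow> j \<in> {1..n} \<Longrightarrow> i \<noteq> j \<Longrightarrow> wedge (r i j) (r j i) \<in> rels n"
  unfolding rels_def by blast

lemma span_scale_iff: "c \<noteq> 0 \<Longrightarrow> qscale c x \<in> Q.span X \<longleftrightarrow> x \<in> Q.span X"
proof
  assume "c \<noteq> 0" "qscale c x \<in> Q.span X"
  then have "qscale (inverse c) (qscale c x) \<in> Q.span X" using Q.span_scale by blast
  then show "x \<in> Q.span X" using \<open>c \<noteq> 0\<close> by (simp add: qscale_mult)
qed (rule Q.span_scale)

lemma lin3:
  assumes "qscale c1 m1 - (qscale c2 m2 - qscale c3 m3) \<in> Q.span X"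
  shows "c1 \<noteq> 0 \<Longrightarrow> qscale c2 m2 \<in> Q.span X \<Longrightarrow> qscale c3 m3 \<in> Q.span X \<Longrightarrow> m1 \<in> Q.span X"
    and "c2 \<noteq> 0 \<Longrightarrow> qscale c1 m1 \<in> Q.span X \<Longrightarrow> qscale c3 m3 \<in> Q.span X \<Longrightarrow> m2 \<in> Q.span X"
proof -
  assume h: "c1 \<noteq> 0" "qscale c2 m2 \<in> Q.span X" "qscale c3 m3 \<in> Q.span X"
  have e: "qscale c1 m1 = (qscale c1 m1 - (qscale c2 m2 - qscale c3 m3)) + (qscale c2 m2 - qscale c3 m3)" by simp
  have "(qscale c1 m1 - (qscale c2 m2 - qscale c3 m3)) + (qscale c2 m2 - qscale c3 m3) \<in> Q.span X"
    using Q.span_add[OF assms Q.span_diff[OF h(2) h(3)]] .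
  then have "qscale c1 m1 \<in> Q.span X" by (subst e)
  then show "m1 \<in> Q.span X" using span_scale_iff[OF h(1)] by simp
next
  assume h: "c2 \<noteq> 0" "qscale c1 m1 \<in> Q.span X" "qscale c3 m3 \<in> Q.span X"
  have e: "qscale c2 m2 = qscale c1 m1 + qscale c3 m3 - (qscale c1 m1 - (qscale c2 m2 - qscale c3 m3))" by simp
  have "qscale c1 m1 + qscale c3 m3 - (qscale c1 m1 - (qscale c2 m2 - qscale c3 m3)) \<in> Q.span X"
    using Q.span_diff[OF Q.span_add[OF h(2) h(3)] assms] .
  then have "qscale c2 m2 \<in> Q.span X" by (subst e)
  then show "m2 \<in> Q.span X" using span_scale_iff[OF h(1)] by simp
qed

definition okp :: "gen set \<Rightarrow> gen \<Rightarrow> gen \<Rightarrow> bool" where "okp A e e' \<longleftrightarrow> e \<noteq> e' \<and> e \<notin> A \<and> e' \<notin> A"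
definition Mp :: "gen set \<Rightarrow> gen \<Rightarrow> gen \<Rightarrow> ext" where "Mp A e e' = mono (insert e (insert e' A))"

lemma red_general:
  assumes A: "A \<subseteq> gens n" "card A + 2 = k" and fA: "finite A"
    and q: "wedge (r a1 b1) (r a2 b2) - (wedge (r a3 b3) (r a4 b4) - wedge (r a5 b5) (r a6 b6)) \<in> rels n"
    and I: "ideal_deg n k \<subseteq> Q.span X"
  shows "okp A (a1, b1) (a2, b2) \<Longrightarrow> (okp A (a3, b3) (a4, b4) \<Longrightarrow> Mp A (a3, b3) (a4, b4) \<in> Q.span X)
      \<Longrightarrow> (okp A (a5, b5) (a6, b6) \<Longrightarrow> Mp A (a5, b5) (a6, b6) \<in> Q.span X) \<Longrightarrow> Mp A (a1, b1) (a2, b2) \<in> Q.span X"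
    and "okp A (a3, b3) (a4, b4) \<Longrightarrow> (okp A (a1, b1) (a2, b2) \<Longrightarrow> Mp A (a1, b1) (a2, b2) \<in> Q.span X)
      \<Longrightarrow> (okp A (a5, b5) (a6, b6) \<Longrightarrow> Mp A (a5, b5) (a6, b6) \<in> Q.span X) \<Longrightarrow> Mp A (a3, b3) (a4, b4) \<in> Q.span X"
proof -
  obtain c1 where c1: "wedge (mono A) (wedge (r a1 b1) (r a2 b2)) = qscale c1 (Mp A (a1, b1) (a2, b2))"
      "c1 \<noteq> 0 \<longleftrightarrow> okp A (a1, b1) (a2, b2)"
    using pair_term[OF fA, of a1 b1 a2 b2] by (auto simp: Mp_def okp_def)
  obtain c2 where c2: "wedge (mono A) (wedge (r a3 b3) (r a4 b4)) = qscale c2 (Mp A (a3, b3) (a4, b4))"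
      "c2 \<noteq> 0 \<longleftrightarrow> okp A (a3, b3) (a4, b4)"
    using pair_term[OF fA, of a3 b3 a4 b4] by (auto simp: Mp_def okp_def)
  obtain c3 where c3: "wedge (mono A) (wedge (r a5 b5) (r a6 b6)) = qscale c3 (Mp A (a5, b5) (a6, b6))"
      "c3 \<noteq> 0 \<longleftrightarrow> okp A (a5, b5) (a6, b6)"
    using pair_term[OF fA, of a5 b5 a6 b6] by (auto simp: Mp_def okp_def)
  have "wedge (mono A) (wedge (r a1 b1) (r a2 b2) - (wedge (r a3 b3) (r a4 b4) - wedge (r a5 b5) (r a6 b6))) \<in> Q.span X"
    using ideal_genI[OF A(1) q A(2)] I by blast
  then have main: "qscale c1 (Mp A (a1, b1) (a2, b2)) - (qscale c2 (Mp A (a3, b3) (a4, b4)) - qscale c3 (Mp A (a5, b5) (a6, b6))) \<in> Q.span X"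
    by (simp add: wedge_diff2 c1 c2 c3)
  have t: "qscale c (Mp A e e') \<in> Q.span X" if "c \<noteq> 0 \<longleftrightarrow> okp A e e'" "okp A e e' \<Longrightarrow> Mp A e e' \<in> Q.span X" for c e e'
    using that by (cases "c = 0") (auto intro: Q.span_scale simp: Q.span_zero)
  show "okp A (a1, b1) (a2, b2) \<Longrightarrow> (okp A (a3, b3) (a4, b4) \<Longrightarrow> Mp A (a3, b3) (a4, b4) \<in> Q.span X)
      \<Longrightarrow> (okp A (a5, b5) (a6, b6) \<Longrightarrow> Mp A (a5, b5) (a6, b6) \<in> Q.span X) \<Longrightarrow> Mp A (a1, b1) (a2, b2) \<in> Q.span X"
  proof -
    assume o: "okp A (a1, b1) (a2, b2)" and h2: "okp A (a3, b3) (a4, b4) \<Longrightarrow> Mp A (a3, b3) (a4, b4) \<in> Q.span X"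
      and h3: "okp A (a5, b5) (a6, b6) \<Longrightarrow> Mp A (a5, b5) (a6, b6) \<in> Q.span X"
    show "Mp A (a1, b1) (a2, b2) \<in> Q.span X"
      by (rule lin3(1)[OF main]) (use o c1(2) t[OF c2(2) h2] t[OF c3(2) h3] in auto)
  qed
  show "okp A (a3, b3) (a4, b4) \<Longrightarrow> (okp A (a1, b1) (a2, b2) \<Longrightarrow> Mp A (a1, b1) (a2, b2) \<in> Q.span X)
      \<Longrightarrow> (okp A (a5, b5) (a6, b6) \<Longrightarrow> Mp A (a5, b5) (a6, b6) \<in> Q.span X) \<Longrightarrow> Mp A (a3, b3) (a4, b4) \<in> Q.span X"
  proof -
    assume o: "okp A (a3, b3) (a4, b4)" and h2: "okp A (a1, b1) (a2, b2) \<Longrightarrow> Mp A (a1, b1) (a2, b2) \<in> Q.span X"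
      and h3: "okp A (a5, b5) (a6, b6) \<Longrightarrow> Mp A (a5, b5) (a6, b6) \<in> Q.span X"
    show "Mp A (a3, b3) (a4, b4) \<in> Q.span X"
      by (rule lin3(2)[OF main]) (use o c2(2) t[OF c1(2) h2] t[OF c3(2) h3] in auto)
  qed
qed

lemma ideal_subspace: "Q.subspace (ideal_deg n k)" by (simp add: ideal_deg_def)

lemma span_ideal: "Q.span (ideal_deg n k) = ideal_deg n k"
  by (simp add: ideal_subspace)

lemma two_cycle:
  assumes S: "S \<subseteq> gens n" "(i, j) \<in> S" "(j, i) \<in> S"
  shows "mono S \<in> ideal_deg n (card S)"
proof -
  have fS: "finite S" using S(1) finite_gens finite_subset by blast
  have ij: "i \<in> {1..n}" "j \<in> {1..n}" "i \<noteq> j" using S by (auto simp: gens_def)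
  define A where "A = S - {(i, j), (j, i)}"
  have SA: "S = insert (i, j) (insert (j, i) A)" using S A_def by auto
  have nA: "(i, j) \<notin> A" "(j, i) \<notin> A" by (auto simp: A_def)
  have fA: "finite A" using fS by (simp add: A_def)
  have cA: "card A + 2 = card S" unfolding SA using nA ij fA by simp
  obtain c where c: "wedge (mono A) (wedge (r i j) (r j i)) = qscale c (mono S)" "c \<noteq> 0"
    using pair_term[OF fA, of i j j i] nA ij SA by auto
  have "wedge (mono A) (wedge (r i j) (r j i)) \<in> ideal_deg n (card S)"
    by (rule ideal_genI[OF _ rel3_in[OF ij] cA]) (use S(1) in \<open>auto simp: A_def\<close>)
  then show ?thesis using c span_scale_iff[OF c(2), of "mono S" "ideal_deg n (card S)"] span_ideal by simp
qed


section \<open>Cycles lie in the ideal\<close>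

definition conn :: "gen set \<Rightarrow> nat \<Rightarrow> nat \<Rightarrow> bool" where "conn S x y \<longleftrightarrow> (x, y) \<in> S \<or> (y, x) \<in> S"
definition cyc :: "gen set \<Rightarrow> nat list \<Rightarrow> bool" where
  "cyc S cs \<longleftrightarrow> (\<forall>t. Suc t < length cs \<longrightarrow> conn S (cs ! t) (cs ! Suc t)) \<and> conn S (last cs) (hd cs)"

lemma cycle_ideal:
  assumes "distinct cs" "length cs \<ge> 3" "set cs \<subseteq> {1..n}" "S \<subseteq> gens n" "cyc S cs"
  shows "mono S \<in> ideal_deg n (card S)"
  using assms
proof (induction "length cs" arbitrary: cs S rule: less_induct)
  case less
  obtain c0 c1 c2 rest where cs: "cs = c0 # c1 # c2 # rest"
    using less.prems(2) by (metis Suc_le_length_iff numeral_3_eq_3)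
  have dist: "c0 \<noteq> c1" "c1 \<noteq> c2" "c0 \<noteq> c2" "c1 \<notin> set rest" "c0 \<notin> set rest" "c2 \<notin> set rest" "distinct rest"
    using less.prems(1) cs by auto
  have inn: "c0 \<in> {1..n}" "c1 \<in> {1..n}" "c2 \<in> {1..n}" "set rest \<subseteq> {1..n}" using less.prems(3) cs by auto
  have fS: "finite S" using less.prems(4) finite_gens finite_subset by blast
  have cn: "\<And>t. Suc t < length cs \<Longrightarrow> conn S (cs ! t) (cs ! Suc t)" "conn S (last cs) (hd cs)"
    using less.prems(5) by (auto simp: cyc_def)
  have c01: "conn S c0 c1" using cn(1)[of 0] cs by simp
  have c12: "conn S c1 c2" using cn(1)[of 1] cs by simp
  define e0 where "e0 = (if (c0, c1) \<in> S then (c0, c1) else (c1, c0))"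
  define e1 where "e1 = (if (c1, c2) \<in> S then (c1, c2) else (c2, c1))"
  have e0S: "e0 \<in> S" using c01 by (auto simp: e0_def conn_def)
  have e1S: "e1 \<in> S" using c12 by (auto simp: e1_def conn_def)
  have e01: "e0 \<noteq> e1" using dist by (auto simp: e0_def e1_def)
  define A where "A = S - {e0, e1}"
  have SA: "S = insert e0 (insert e1 A)" using e0S e1S by (auto simp: A_def)
  have nA: "e0 \<notin> A" "e1 \<notin> A" by (auto simp: A_def)
  have fA: "finite A" using fS by (simp add: A_def)
  have cA: "card A + 2 = card S" unfolding SA using nA e01 fA by simp
  have AS: "A \<subseteq> gens n" using less.prems(4) by (auto simp: A_def)
  have connA: "conn A u v" if "conn S u v" "u \<noteq> c1" "v \<noteq> c1" for u v
    using that by (auto simp: conn_def A_def e0_def e1_def)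
  have gx: "(c0, c2) \<in> gens n" "(c2, c0) \<in> gens n" using inn dist by (auto simp: gens_def)
  have SHORT: "mono (insert x (insert y A)) \<in> ideal_deg n (card S)"
    if x: "x \<in> {(c0, c2), (c2, c0)}" and y: "y \<in> gens n" and xy: "x \<noteq> y" "x \<notin> A" "y \<notin> A" for x y
  proof -
    define S' where "S' = insert x (insert y A)"
    have cS': "card S' = card S" unfolding S'_def using xy fA cA by simp
    have S'g: "S' \<subseteq> gens n" unfolding S'_def using x y AS gx by auto
    have AS': "A \<subseteq> S'" by (auto simp: S'_def)
    show ?thesis
    proof (cases "rest = []")
      case True
      have "conn S c2 c0" using cn(2) cs True by simp
      then have "conn A c2 c0" using connA dist by blast
      then obtain e2 where e2: "e2 \<in> A" "e2 = (c2, c0) \<or> e2 = (c0, c2)" by (auto simp: conn_def)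
      have "x \<noteq> e2" using e2(1) xy by auto
      then have "(c0, c2) \<in> S'" "(c2, c0) \<in> S'" using e2 x AS' by (auto simp: S'_def)
      then show ?thesis using two_cycle[OF S'g] cS' unfolding S'_def by metis
    next
      case False
      define cs' where "cs' = c0 # c2 # rest"
      have len: "length cs' < length cs" "length cs' \<ge> 3" using False by (auto simp: cs cs'_def Suc_le_eq)
      have d': "distinct cs'" using less.prems(1) by (auto simp: cs cs'_def)
      have s': "set cs' \<subseteq> {1..n}" using less.prems(3) by (auto simp: cs cs'_def)
      have cy: "cyc S' cs'" unfolding cyc_def
      proof (intro conjI allI impI)
        fix t assume t: "Suc t < length cs'"
        show "conn S' (cs' ! t) (cs' ! Suc t)"
        proof (cases t)
          case 0 then show ?thesis using x by (auto simp: cs'_def S'_def conn_def)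
        next
          case (Suc t')
          have c: "conn S (cs ! Suc t) (cs ! Suc (Suc t))" using cn(1)[of "Suc t"] t by (simp add: cs cs'_def)
          have e: "cs ! Suc t = cs' ! t" "cs ! Suc (Suc t) = cs' ! Suc t" using Suc by (simp_all add: cs cs'_def)
          have i1: "cs' ! t = (c2 # rest) ! t'" using Suc by (simp add: cs'_def)
          have i2: "cs' ! Suc t = (c2 # rest) ! Suc t'" using Suc by (simp add: cs'_def)
          have l1: "t' < length (c2 # rest)" "Suc t' < length (c2 # rest)" using t Suc by (simp_all add: cs'_def)
          have m1: "cs' ! t \<in> set (c2 # rest)" unfolding i1 by (rule nth_mem[OF l1(1)])
          have m2: "cs' ! Suc t \<in> set (c2 # rest)" unfolding i2 by (rule nth_mem[OF l1(2)])
          have n1: "cs' ! t \<noteq> c1" "cs' ! Suc t \<noteq> c1" using m1 m2 dist by auto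
          have "conn A (cs' ! t) (cs' ! Suc t)" using connA[OF _ n1] c e by simp
          then show ?thesis using AS' by (auto simp: conn_def)
        qed
      next
        have l: "last cs' = last cs" "hd cs' = hd cs" using False by (simp_all add: cs cs'_def)
        have "last cs' \<noteq> c1" using False dist by (simp add: cs'_def) (metis last_in_set)
        moreover have "hd cs' \<noteq> c1" using dist by (simp add: cs'_def)
        ultimately have "conn A (last cs') (hd cs')" using connA cn(2) l by metis
        then show "conn S' (last cs') (hd cs')" using AS' by (auto simp: conn_def)
      qed
      have "mono S' \<in> ideal_deg n (card S')" using less.hyps[OF len(1) d' len(2) s' S'g cy] .
      then show ?thesis using cS' by (simp add: S'_def)
    qed
  qed
  have SHORT': "mono (insert y (insert x A)) \<in> ideal_deg n (card S)"
    if "x \<in> {(c0, c2), (c2, c0)}" "y \<in> gens n" "x \<noteq> y" "x \<notin> A" "y \<notin> A" for x y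
    using SHORT[OF that] by (simp add: insert_commute)
  have g: "\<And>a b. a \<in> {1..n} \<Longrightarrow> b \<in> {1..n} \<Longrightarrow> a \<noteq> b \<Longrightarrow> (a, b) \<in> gens n" by (auto simp: gens_def)
  note sp = span_ideal[of n "card S"]
  have SH1: "Mp A y x \<in> Q.span (ideal_deg n (card S))"
    if "okp A y x" "x \<in> {(c0, c2), (c2, c0)}" "y \<in> gens n" for x y
    unfolding sp Mp_def using that by (intro SHORT') (auto simp: okp_def)
  have SH2: "Mp A x y \<in> Q.span (ideal_deg n (card S))"
    if "okp A x y" "x \<in> {(c0, c2), (c2, c0)}" "y \<in> gens n" for x y
    unfolding sp Mp_def using that by (intro SHORT) (auto simp: okp_def)
  have X02: "(c0, c2) \<in> {(c0, c2), (c2, c0)}" and X20: "(c2, c0) \<in> {(c0, c2), (c2, c0)}" by auto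
  have G: "(c1, c0) \<in> gens n" "(c1, c2) \<in> gens n" "(c2, c1) \<in> gens n" "(c0, c1) \<in> gens n"
    using inn dist by (auto intro!: g)
  note red = red_general[OF AS cA fA _ Q.span_superset]
  have or0: "e0 = (c0, c1) \<or> e0 = (c1, c0)" by (simp add: e0_def)
  have or1: "e1 = (c1, c2) \<or> e1 = (c2, c1)" by (simp add: e1_def)
  consider "e0 = (c1, c0)" "e1 = (c1, c2)" | "e0 = (c0, c1)" "e1 = (c2, c1)" | "e0 = (c0, c1)" "e1 = (c1, c2)"
    | "e0 = (c1, c0)" "e1 = (c2, c1)" using or0 or1 by blast
  then show ?case
  proof cases
    case 1
    have q: "wedge (r c1 c0) (r c1 c2) - (wedge (r c1 c0) (r c0 c2) - wedge (r c1 c2) (r c2 c0)) \<in> rels n"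
      by (rule rel1_in) (use inn dist in auto)
    have o: "okp A (c1, c0) (c1, c2)" using 1 nA e01 by (simp add: okp_def)
    have "Mp A (c1, c0) (c1, c2) \<in> Q.span (ideal_deg n (card S))"
      by (rule red(1)[OF q o SH1[OF _ X02 G(1)] SH1[OF _ X20 G(2)]])
    moreover have "Mp A (c1, c0) (c1, c2) = mono S" unfolding Mp_def using 1 SA  by metis
    ultimately show ?thesis using sp by simp
  next
    case 2
    have q: "wedge (r c0 c1) (r c2 c1) - (wedge (r c0 c2) (r c2 c1) - wedge (r c2 c0) (r c0 c1)) \<in> rels n"
      by (rule rel2_in) (use inn dist in auto)
    have o: "okp A (c0, c1) (c2, c1)" using 2 nA e01 by (simp add: okp_def)
    have "Mp A (c0, c1) (c2, c1) \<in> Q.span (ideal_deg n (card S))"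
      by (rule red(1)[OF q o SH2[OF _ X02 G(3)] SH2[OF _ X20 G(4)]])
    moreover have "Mp A (c0, c1) (c2, c1) = mono S" unfolding Mp_def using 2 SA  by metis
    ultimately show ?thesis using sp by simp
  next
    case 3
    have q: "wedge (r c0 c2) (r c1 c2) - (wedge (r c0 c1) (r c1 c2) - wedge (r c1 c0) (r c0 c2)) \<in> rels n"
      by (rule rel2_in) (use inn dist in auto)
    have o: "okp A (c0, c1) (c1, c2)" using 3 nA e01 by (simp add: okp_def)
    have "Mp A (c0, c1) (c1, c2) \<in> Q.span (ideal_deg n (card S))"
      by (rule red(2)[OF q o SH2[OF _ X02 G(2)] SH1[OF _ X02 G(1)]])
    moreover have "Mp A (c0, c1) (c1, c2) = mono S" unfolding Mp_def using 3 SA  by metis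
    ultimately show ?thesis using sp by simp
  next
    case 4
    have q: "wedge (r c2 c1) (r c2 c0) - (wedge (r c2 c1) (r c1 c0) - wedge (r c2 c0) (r c0 c1)) \<in> rels n"
      by (rule rel1_in) (use inn dist in auto)
    have o: "okp A (c2, c1) (c1, c0)" using 4 nA dist by (auto simp: okp_def)
    have "Mp A (c2, c1) (c1, c0) \<in> Q.span (ideal_deg n (card S))"
      by (rule red(2)[OF q o SH1[OF _ X20 G(3)] SH2[OF _ X20 G(4)]])
    moreover have "Mp A (c2, c1) (c1, c0) = mono S" unfolding Mp_def using 4 SA insert_commute by metis
    ultimately show ?thesis using sp by simp
  qed
qed


definition WZ :: "nat \<Rightarrow> nat \<Rightarrow> nat set \<Rightarrow> ext set" where
  "WZ n k Z = Q.span ({mono (edges P) | P. lp n P \<and> card P + k = n \<and> Z \<subseteq> Sing P} \<union> ideal_deg n k)"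

lemma WZ_gen: "lp n P \<Longrightarrow> card P + k = n \<Longrightarrow> Z \<subseteq> Sing P \<Longrightarrow> mono (edges P) \<in> WZ n k Z"
  unfolding WZ_def by (rule Q.span_base) blast

lemma WZ_ideal: "ideal_deg n k \<subseteq> WZ n k Z"
  unfolding WZ_def using Q.span_superset by blast

lemma WZ_mono: "Z' \<subseteq> Z \<Longrightarrow> WZ n k Z \<subseteq> WZ n k Z'"
  unfolding WZ_def by (rule Q.span_mono) blast

lemma rmul: assumes "finite S" "(a, b) \<notin> S"
  shows "wedge (r a b) (mono S) = qscale (wsign {(a, b)} S) (mono (insert (a, b) S))"
  using assms by (simp add: r_mono mono_mult)

lemma rmul0: assumes "finite S" "(a, b) \<in> S" shows "wedge (r a b) (mono S) = 0"
  using assms by (simp add: r_mono mono_mult)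

lemma rmul_span: assumes "finite S" "(a, b) \<notin> S"
  shows "wedge (r a b) (mono S) \<in> Q.span X \<longleftrightarrow> mono (insert (a, b) S) \<in> Q.span X"
  using rmul[OF assms] span_scale_iff[OF wsign_nz] by simp

lemma rmul_WZ: "finite S \<Longrightarrow> (a, b) \<notin> S \<Longrightarrow>
  wedge (r a b) (mono S) \<in> WZ n k Z \<longleftrightarrow> mono (insert (a, b) S) \<in> WZ n k Z"
  unfolding WZ_def by (rule rmul_span)

lemma sing_not: assumes "lp n P" "zs \<in> P" "x \<in> set zs" "y \<in> set zs" "x \<noteq> y" shows "x \<notin> Sing P"
proof
  assume "x \<in> Sing P" then have xP: "[x] \<in> P" by (simp add: Sing_def)
  have "zs = [x]" using lp_same[OF assms(1,2) xP assms(3)] by simp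
  then show False using assms(4,5) by simp
qed

lemma sing_edge: "lp n P \<Longrightarrow> [v] \<in> P \<Longrightarrow> (a, b) \<in> edges P \<Longrightarrow> a \<noteq> v \<and> b \<noteq> v"
proof -
  assume P: "lp n P" and v: "[v] \<in> P" and e: "(a, b) \<in> edges P"
  obtain xs where xs: "xs \<in> P" "(a, b) \<in> ledges xs" using e by (auto simp: edges_def)
  have ab: "a \<in> set xs" "b \<in> set xs" "a \<noteq> b" using ledges_set[OF xs(2)] ledges_neq[OF lpD(2)[OF P xs(1)] xs(2)] by auto
  show ?thesis
  proof (rule ccontr)
    assume "\<not> (a \<noteq> v \<and> b \<noteq> v)"
    then have "xs = [v]" using lp_same[OF P xs(1) v] ab by auto
    then show False using ab by auto
  qed
qed

lemma join3:
  assumes P: "lp n P" and l1: "l1 \<in> P" and v: "[v] \<in> P" and l2: "l2 \<in> P"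
    and d: "l1 \<noteq> [v]" "l2 \<noteq> [v]" "l1 \<noteq> l2"
  shows "\<exists>P2. lp n P2 \<and> card P2 + 2 = card P \<and> edges P2 = insert (last l1, v) (insert (v, hd l2) (edges P))
     \<and> (\<forall>y. y \<in> Sing P \<longrightarrow> y \<notin> set l1 \<longrightarrow> y \<notin> set l2 \<longrightarrow> y \<noteq> v \<longrightarrow> y \<in> Sing P2)"
proof -
  define P1 where "P1 = insert (l1 @ [v]) (P - {l1, [v]})"
  note J1 = lp_join[OF P l1 v d(1), folded P1_def]
  have l1v: "l1 @ [v] \<in> P1" by (simp add: P1_def)
  have l2P1: "l2 \<in> P1" using l2 d by (simp add: P1_def)
  have ne: "l1 @ [v] \<noteq> l2"
  proof
    assume "l1 @ [v] = l2"
    then have "v \<in> set l2" by auto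
    then have "l2 = [v]" using lp_same[OF P l2 v] by simp
    then show False using d by simp
  qed
  define P2 where "P2 = insert ((l1 @ [v]) @ l2) (P1 - {l1 @ [v], l2})"
  note J2 = lp_join[OF J1(1) l1v l2P1 ne, folded P2_def]
  show ?thesis
  proof (intro exI conjI allI impI)
    show "lp n P2" using J2(1) .
    show "card P2 + 2 = card P" using J1(2) J2(2) by simp
    show "edges P2 = insert (last l1, v) (insert (v, hd l2) (edges P))" using J1(3) J2(3) by auto
    fix y assume "y \<in> Sing P" "y \<notin> set l1" "y \<notin> set l2" "y \<noteq> v"
    then show "y \<in> Sing P2" using J1(5) J2(5) by simp
  qed
qed

lemma WZ_red:
  assumes A: "A \<subseteq> gens n" "card A + 2 = k" "finite A"
    and q: "wedge (r a1 b1) (r a2 b2) - (wedge (r a3 b3) (r a4 b4) - wedge (r a5 b5) (r a6 b6)) \<in> rels n"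
  shows "okp A (a1, b1) (a2, b2) \<Longrightarrow> (okp A (a3, b3) (a4, b4) \<Longrightarrow> Mp A (a3, b3) (a4, b4) \<in> WZ n k Z)
      \<Longrightarrow> (okp A (a5, b5) (a6, b6) \<Longrightarrow> Mp A (a5, b5) (a6, b6) \<in> WZ n k Z) \<Longrightarrow> Mp A (a1, b1) (a2, b2) \<in> WZ n k Z"
proof -
  have I: "ideal_deg n k \<subseteq> Q.span ({mono (edges P) | P. lp n P \<and> card P + k = n \<and> Z \<subseteq> Sing P} \<union> ideal_deg n k)"
    by (rule subset_trans[OF _ Q.span_superset]) blast
  show "okp A (a1, b1) (a2, b2) \<Longrightarrow> (okp A (a3, b3) (a4, b4) \<Longrightarrow> Mp A (a3, b3) (a4, b4) \<in> WZ n k Z)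
      \<Longrightarrow> (okp A (a5, b5) (a6, b6) \<Longrightarrow> Mp A (a5, b5) (a6, b6) \<in> WZ n k Z) \<Longrightarrow> Mp A (a1, b1) (a2, b2) \<in> WZ n k Z"
    unfolding WZ_def by (rule red_general(1)[OF A(1,2,3) q I])
qed

lemma InsA:
  assumes "lp n P" "zs \<in> P" "zs = pre @ u # post" "[v] \<in> P" "u \<noteq> v" "card P + k = n"
  shows "wedge (r u v) (mono (edges P)) \<in> WZ n (Suc k) (Sing P - {u, v})"
  using assms
proof (induction post arbitrary: pre u k)
  case Nil
  have zv: "zs \<noteq> [v]" using Nil by auto
  define P' where "P' = insert (zs @ [v]) (P - {zs, [v]})"
  note J = lp_join[OF Nil.prems(1,2,4) zv, folded P'_def]
  have uv: "(u, v) \<notin> edges P" using sing_edge[OF Nil.prems(1,4)] by blast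
  have eq: "edges P' = insert (u, v) (edges P)" using J(3) Nil.prems(3) by simp
  have Z: "Sing P - {u, v} \<subseteq> Sing P'"
  proof
    fix y assume y: "y \<in> Sing P - {u, v}"
    have "y \<notin> set zs" using sing_not[OF Nil.prems(1,2), of y u] y Nil.prems(3) by auto
    then show "y \<in> Sing P'" using J(5) y by auto
  qed
  have "mono (edges P') \<in> WZ n (Suc k) (Sing P - {u, v})"
    using WZ_gen[OF J(1) _ Z] J(2) Nil.prems(6) by simp
  then show ?case using rmul_WZ[OF finite_edges[OF Nil.prems(1)] uv] eq by simp
next
  case (Cons w post')
  note P = Cons.prems(1)
  have zs: "zs = (pre @ [u]) @ (w # post')" using Cons.prems(3) by simp
  define P0 where "P0 = insert (pre @ [u]) (insert (w # post') (P - {zs}))"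
  note Sp = lp_split[OF P Cons.prems(2) zs _ _, folded P0_def, simplified]
  have dz: "distinct zs" using lpD(2)[OF P Cons.prems(2)] .
  have uw: "u \<noteq> w" using dz zs by auto
  have vz: "v \<notin> set zs"
  proof
    assume "v \<in> set zs" then have "zs = [v]" using lp_same[OF P Cons.prems(2,4)] by simp
    then show False using zs by simp
  qed
  have wv: "w \<noteq> v" using vz zs by auto
  have inn: "u \<in> {1..n}" "v \<in> {1..n}" "w \<in> {1..n}"
    using lp_range[OF P Cons.prems(2)] lp_range[OF P Cons.prems(4)] zs by auto
  have vP0: "[v] \<in> P0" using Cons.prems(4) vz by (auto simp: P0_def)
  have l1: "pre @ [u] \<in> P0" "w # post' \<in> P0" by (auto simp: P0_def)
  have fA: "finite (edges P0)" using finite_edges[OF Sp(1)] .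
  have AS: "edges P0 \<subseteq> gens n" using edges_gens[OF Sp(1)] .
  have cE: "card (edges P) + card P = n" using card_edges[OF P] .
  have c1: "card (edges P) = Suc (card (edges P0))" unfolding Sp(3) using Sp(4) fA by simp
  have c2: "card (edges P) = k" using cE Cons.prems(6) by simp
  have cA: "card (edges P0) + 2 = Suc k" using c1 c2 by simp
  obtain P2 where P2: "lp n P2" "card P2 + 2 = card P0"
      "edges P2 = insert (u, v) (insert (v, w) (edges P0))"
      "\<And>y. y \<in> Sing P0 \<Longrightarrow> y \<notin> set (pre @ [u]) \<Longrightarrow> y \<notin> set (w # post') \<Longrightarrow> y \<noteq> v \<Longrightarrow> y \<in> Sing P2"
  proof -
    have disj: "set (pre @ [u]) \<inter> set (w # post') = {}" using dz unfolding zs distinct_append by blast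
    have d1: "pre @ [u] \<noteq> [v]" using Cons.prems(5) by (metis last_ConsL last_snoc)
    have d2: "w # post' \<noteq> [v]" using wv by simp
    have d3: "pre @ [u] \<noteq> w # post'" using disj by (cases pre) auto
    note d = d1 d2 d3
    show ?thesis using join3[OF Sp(1) l1(1) vP0 l1(2) d] that by auto
  qed
  have nvA: "(u, v) \<notin> edges P0" "(v, w) \<notin> edges P0" "(w, v) \<notin> edges P0"
    using sing_edge[OF Sp(1) vP0] by blast+
  have uwA: "(u, w) \<notin> edges P0" using Sp(4) by simp
  have ZZ: "Sing P - {u, v} = Sing P - {w, v}"
    using sing_not[OF P Cons.prems(2), of u w] sing_not[OF P Cons.prems(2), of w u] zs uw by auto
  have q: "wedge (r u v) (r u w) - (wedge (r u v) (r v w) - wedge (r u w) (r w v)) \<in> rels n"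
    by (rule rel1_in) (use inn uw wv Cons.prems(5) in auto)
  have M2: "Mp (edges P0) (u, v) (v, w) \<in> WZ n (Suc k) (Sing P - {u, v})"
  proof -
    have Z: "Sing P - {u, v} \<subseteq> Sing P2"
    proof
      fix y assume y: "y \<in> Sing P - {u, v}"
      have "y \<notin> set zs" using sing_not[OF P Cons.prems(2), of y u] y zs by auto
      then show "y \<in> Sing P2" using P2(4) Sp(5) y zs by auto
    qed
    have "card P2 + Suc k = n" using P2(2) Sp(2) Cons.prems(6) by simp
    then show ?thesis using WZ_gen[OF P2(1) _ Z] P2(3) by (simp add: Mp_def)
  qed
  have M3: "Mp (edges P0) (u, w) (w, v) \<in> WZ n (Suc k) (Sing P - {u, v})"
  proof -
    have IH: "wedge (r w v) (mono (edges P)) \<in> WZ n (Suc k) (Sing P - {w, v})"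
      by (rule Cons.IH[OF P Cons.prems(2) zs Cons.prems(4) wv Cons.prems(6)])
    have wvP: "(w, v) \<notin> edges P" using sing_edge[OF P Cons.prems(4)] by blast
    have "mono (insert (w, v) (edges P)) \<in> WZ n (Suc k) (Sing P - {w, v})"
      using IH rmul_WZ[OF finite_edges[OF P] wvP] by simp
    then show ?thesis using Sp(3) ZZ by (simp add: Mp_def insert_commute)
  qed
  have "Mp (edges P0) (u, v) (u, w) \<in> WZ n (Suc k) (Sing P - {u, v})"
    by (rule WZ_red[OF AS cA fA q]) (use M2 M3 nvA uwA wv in \<open>auto simp: okp_def\<close>)
  then have "mono (insert (u, v) (edges P)) \<in> WZ n (Suc k) (Sing P - {u, v})"
    using Sp(3) by (simp add: Mp_def)
  moreover have "(u, v) \<notin> edges P" using sing_edge[OF P Cons.prems(4)] by blast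
  ultimately show ?case using rmul_WZ[OF finite_edges[OF P]] by simp
qed


lemma InsB:
  assumes "lp n P" "zs \<in> P" "zs = pre @ u # post" "[v] \<in> P" "u \<noteq> v" "card P + k = n"
  shows "wedge (r v u) (mono (edges P)) \<in> WZ n (Suc k) (Sing P - {u, v})"
  using assms
proof (induction pre arbitrary: u post k rule: rev_induct)
  case Nil
  have zv: "[v] \<noteq> zs" using Nil by auto
  define P' where "P' = insert ([v] @ zs) (P - {[v], zs})"
  note J = lp_join[OF Nil.prems(1,4,2) zv, folded P'_def]
  have uv: "(v, u) \<notin> edges P" using sing_edge[OF Nil.prems(1,4)] by blast
  have eq: "edges P' = insert (v, u) (edges P)" using J(3) Nil.prems(3) by simp
  have Z: "Sing P - {u, v} \<subseteq> Sing P'"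
  proof
    fix y assume y: "y \<in> Sing P - {u, v}"
    have "y \<notin> set zs" using sing_not[OF Nil.prems(1,2), of y u] y Nil.prems(3) by auto
    then show "y \<in> Sing P'" using J(5) y by auto
  qed
  have "mono (edges P') \<in> WZ n (Suc k) (Sing P - {u, v})"
    using WZ_gen[OF J(1) _ Z] J(2) Nil.prems(6) by simp
  then show ?case using rmul_WZ[OF finite_edges[OF Nil.prems(1)] uv] eq by simp
next
  case (snoc w pre')
  note P = snoc.prems(1)
  have zs: "zs = (pre' @ [w]) @ (u # post)" using snoc.prems(3) by simp
  define P0 where "P0 = insert (pre' @ [w]) (insert (u # post) (P - {zs}))"
  note Sp = lp_split[OF P snoc.prems(2) zs _ _, folded P0_def, simplified]
  have dz: "distinct zs" using lpD(2)[OF P snoc.prems(2)] .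
  have uw: "u \<noteq> w" using dz zs by auto
  have vz: "v \<notin> set zs"
  proof
    assume "v \<in> set zs" then have "zs = [v]" using lp_same[OF P snoc.prems(2,4)] by simp
    then show False using zs by simp
  qed
  have wv: "w \<noteq> v" using vz zs by auto
  have inn: "u \<in> {1..n}" "v \<in> {1..n}" "w \<in> {1..n}"
    using lp_range[OF P snoc.prems(2)] lp_range[OF P snoc.prems(4)] zs by auto
  have vP0: "[v] \<in> P0" using snoc.prems(4) vz by (auto simp: P0_def)
  have l1: "pre' @ [w] \<in> P0" "u # post \<in> P0" by (auto simp: P0_def)
  have fA: "finite (edges P0)" using finite_edges[OF Sp(1)] .
  have AS: "edges P0 \<subseteq> gens n" using edges_gens[OF Sp(1)] .
  have cE: "card (edges P) + card P = n" using card_edges[OF P] .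
  have c1: "card (edges P) = Suc (card (edges P0))" unfolding Sp(3) using Sp(4) fA by simp
  have c2: "card (edges P) = k" using cE snoc.prems(6) by simp
  have cA: "card (edges P0) + 2 = Suc k" using c1 c2 by simp
  obtain P2 where P2: "lp n P2" "card P2 + 2 = card P0"
      "edges P2 = insert (w, v) (insert (v, u) (edges P0))"
      "\<And>y. y \<in> Sing P0 \<Longrightarrow> y \<notin> set (pre' @ [w]) \<Longrightarrow> y \<notin> set (u # post) \<Longrightarrow> y \<noteq> v \<Longrightarrow> y \<in> Sing P2"
  proof -
    have disj: "set (pre' @ [w]) \<inter> set (u # post) = {}" using dz unfolding zs distinct_append by blast
    have d1: "pre' @ [w] \<noteq> [v]" using wv by (metis last_ConsL last_snoc)
    have d2: "u # post \<noteq> [v]" using snoc.prems(5) by simp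
    have d3: "pre' @ [w] \<noteq> u # post" using disj by (cases pre') auto
    show ?thesis using join3[OF Sp(1) l1(1) vP0 l1(2) d1 d2 d3] that by auto
  qed
  have nvA: "(v, u) \<notin> edges P0" "(w, v) \<notin> edges P0" "(v, w) \<notin> edges P0"
    using sing_edge[OF Sp(1) vP0] by blast+
  have uwA: "(w, u) \<notin> edges P0" using Sp(4) by simp
  have ZZ: "Sing P - {u, v} = Sing P - {w, v}"
    using sing_not[OF P snoc.prems(2), of u w] sing_not[OF P snoc.prems(2), of w u] zs uw by auto
  have q: "wedge (r w u) (r v u) - (wedge (r w v) (r v u) - wedge (r v w) (r w u)) \<in> rels n"
    by (rule rel2_in) (use inn uw wv snoc.prems(5) in auto)
  have M2: "Mp (edges P0) (w, v) (v, u) \<in> WZ n (Suc k) (Sing P - {u, v})"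
  proof -
    have Z: "Sing P - {u, v} \<subseteq> Sing P2"
    proof
      fix y assume y: "y \<in> Sing P - {u, v}"
      have "y \<notin> set zs" using sing_not[OF P snoc.prems(2), of y u] y zs by auto
      then show "y \<in> Sing P2" using P2(4) Sp(5) y zs by auto
    qed
    have "card P2 + Suc k = n" using P2(2) Sp(2) snoc.prems(6) by simp
    then show ?thesis using WZ_gen[OF P2(1) _ Z] P2(3) by (simp add: Mp_def)
  qed
  have M3: "Mp (edges P0) (v, w) (w, u) \<in> WZ n (Suc k) (Sing P - {u, v})"
  proof -
    have zs': "zs = pre' @ w # (u # post)" using zs by simp
    have IH: "wedge (r v w) (mono (edges P)) \<in> WZ n (Suc k) (Sing P - {w, v})"
      by (rule snoc.IH[OF P snoc.prems(2) zs' snoc.prems(4) wv snoc.prems(6)])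
    have wvP: "(v, w) \<notin> edges P" using sing_edge[OF P snoc.prems(4)] by blast
    have "mono (insert (v, w) (edges P)) \<in> WZ n (Suc k) (Sing P - {w, v})"
      using IH rmul_WZ[OF finite_edges[OF P] wvP] by simp
    then show ?thesis using Sp(3) ZZ by (simp add: Mp_def)
  qed
  have "Mp (edges P0) (w, u) (v, u) \<in> WZ n (Suc k) (Sing P - {u, v})"
    by (rule WZ_red[OF AS cA fA q]) (use M2 M3 nvA uwA wv in \<open>auto simp: okp_def\<close>)
  then have "mono (insert (v, u) (edges P)) \<in> WZ n (Suc k) (Sing P - {u, v})"
    using Sp(3) by (simp add: Mp_def insert_commute)
  moreover have "(v, u) \<notin> edges P" using sing_edge[OF P snoc.prems(4)] by blast
  ultimately show ?case using rmul_WZ[OF finite_edges[OF P]] by simp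
qed


lemma wedge_span:
  assumes "\<And>x. x \<in> S \<Longrightarrow> wedge h x \<in> Q.span T" "y \<in> Q.span S"
  shows "wedge h y \<in> Q.span T"
  using assms(2)
proof (induction rule: Q.span_induct)
  case base
  show ?case unfolding Q.subspace_def
    by (auto simp: wedge_add2 wedge_scale2 intro: Q.span_zero Q.span_add Q.span_scale)
next
  case (step x) then show ?case using assms(1) by blast
qed

lemma LM:
  assumes g: "(a, b) \<in> gens n" and x: "x \<in> ideal_deg n k"
  shows "wedge (r a b) x \<in> ideal_deg n (Suc k)"
proof -
  have hy: "wedge (r a b) y \<in> Q.span (ideal_deg n (Suc k))"
    if y: "y \<in> {wedge (wedge (mono A) q) (mono B) | A B q.
        A \<subseteq> gens n \<and> B \<subseteq> gens n \<and> card A + card B + 2 = k \<and> q \<in> rels n}" for y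
  proof -
    obtain A B q where y': "y = wedge (wedge (mono A) q) (mono B)" "A \<subseteq> gens n" "B \<subseteq> gens n"
        "card A + card B + 2 = k" "q \<in> rels n" using y by blast
    have fA: "finite A" using y'(2) finite_gens finite_subset by blast
    have e: "wedge (r a b) y = wedge (wedge (wedge (r a b) (mono A)) q) (mono B)"
      using y'(1) by (simp add: wedge_assoc)
    show ?thesis
    proof (cases "(a, b) \<in> A")
      case True
      then show ?thesis using e rmul0[OF fA True] by (simp add: Q.span_zero)
    next
      case False
      have cI: "card (insert (a, b) A) + card B + 2 = Suc k" using y'(4) fA False by simp
      have sI: "insert (a, b) A \<subseteq> gens n" using g y'(2) by simp
      have "wedge (wedge (mono (insert (a, b) A)) q) (mono B) \<in> ideal_deg n (Suc k)"
        unfolding ideal_deg_def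
        by (rule Q.span_base) (use y'(3,5) cI sI in blast)
      then have "wedge (wedge (mono (insert (a, b) A)) q) (mono B) \<in> Q.span (ideal_deg n (Suc k))"
        by (simp add: span_ideal)
      then have "qscale (wsign {(a, b)} A) (wedge (wedge (mono (insert (a, b) A)) q) (mono B)) \<in> Q.span (ideal_deg n (Suc k))"
        by (rule Q.span_scale)
      then show ?thesis using e rmul[OF fA False] by (simp add: wedge_scale1)
    qed
  qed
  have x': "x \<in> Q.span {wedge (wedge (mono A) q) (mono B) | A B q.
        A \<subseteq> gens n \<and> B \<subseteq> gens n \<and> card A + card B + 2 = k \<and> q \<in> rels n}"
    using x unfolding ideal_deg_def .
  have "wedge (r a b) x \<in> Q.span (ideal_deg n (Suc k))" by (rule wedge_span[OF hy x'])
  then show ?thesis by (simp add: span_ideal)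
qed

lemma lift:
  assumes g: "(c, d) \<in> gens n" and x: "x \<in> WZ n K Z0"
    and gen: "\<And>P'. lp n P' \<Longrightarrow> card P' + K = n \<Longrightarrow> Z0 \<subseteq> Sing P' \<Longrightarrow> wedge (r c d) (mono (edges P')) \<in> WZ n (Suc K) Z"
  shows "wedge (r c d) x \<in> WZ n (Suc K) Z"
proof -
  have hy: "wedge (r c d) y \<in> WZ n (Suc K) Z"
    if "y \<in> {mono (edges P) | P. lp n P \<and> card P + K = n \<and> Z0 \<subseteq> Sing P} \<union> ideal_deg n K" for y
    using that gen LM[OF g] WZ_ideal by blast
  show ?thesis using wedge_span[OF hy[unfolded WZ_def[of n "Suc K" Z]] x[unfolded WZ_def]]
    unfolding WZ_def .
qed

lemma deg1_r: "deg1 (r a b)" by (simp add: r_mono)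

lemma swap_r: "wedge (r a b) (wedge (r c d) f) = - wedge (r c d) (wedge (r a b) f)"
  by (simp flip: wedge_assoc add: deg1_anticomm[OF deg1_r deg1_r, of a b c d] wedge_uminus1)

lemma qscale_uminus: "qscale c (- x) = - qscale c x" by (simp add: qscale_def fun_eq_iff)

lemma WZ_neg_scale: "x \<in> WZ n k Z \<Longrightarrow> - qscale c x \<in> WZ n k Z"
  unfolding WZ_def by (intro Q.span_neg Q.span_scale)

lemma mono_insert_eq: assumes "finite S" "(a, b) \<notin> S"
  shows "mono (insert (a, b) S) = qscale (wsign {(a, b)} S) (wedge (r a b) (mono S))"
  using rmul[OF assms] by (simp add: qscale_mult)

lemma merge:
  assumes "lp n P" "xs \<in> P" "ys \<in> P" "xs \<noteq> ys" "a \<in> set xs" "b \<in> set ys" "card P + k = n"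
  shows "wedge (r a b) (mono (edges P)) \<in> WZ n (Suc k) (Sing P - {a, b})"
  using assms
proof (induction "length ys" arbitrary: P ys k rule: less_induct)
  case less
  note P = less.prems(1)
  have disj: "set xs \<inter> set ys = {}" using lpD(3)[OF P less.prems(2,3,4)] .
  have ab: "a \<noteq> b" using disj less.prems(5,6) by auto
  have dys: "distinct ys" using lpD(2)[OF P less.prems(3)] .
  have cE: "card (edges P) + card P = n" using card_edges[OF P] .
  have inn: "\<And>v. v \<in> set ys \<Longrightarrow> v \<in> {1..n}" using lp_range[OF P less.prems(3)] by blast
  show ?case
  proof (cases "length ys = 1")
    case True
    then have ys: "ys = [b]" using less.prems(6) by (cases ys) auto
    obtain pre post where xs: "xs = pre @ a # post" using less.prems(5) by (meson split_list)
    show ?thesis using InsA[OF P less.prems(2) xs less.prems(3)[unfolded ys] ab less.prems(7)] .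
  next
    case False
    then have len2: "length ys \<ge> 2" using less.prems(6) by (cases ys) (auto simp: Suc_le_eq)
    show ?thesis
    proof (cases "b = last ys")
      case False
      define ys0 where "ys0 = butlast ys"
      define y where "y = last ys"
      have "ys \<noteq> []" using len2 by auto
      then have ysd: "ys = ys0 @ [y]" by (simp add: ys0_def y_def)
      have ys0ne: "ys0 \<noteq> []" using len2 ysd by (cases ys0) auto
      have yb: "y \<noteq> b" using False by (simp add: y_def)
      have "b \<in> set (ys0 @ [y])" using less.prems(6) ysd by simp
      then have bys0: "b \<in> set ys0" using yb by auto
      define z where "z = last ys0"
      have zys0: "z \<in> set ys0" using ys0ne by (simp add: z_def)
      have zy: "z \<noteq> y" using dys ysd zys0 by auto
      define P0 where "P0 = insert ys0 (insert [y] (P - {ys}))"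
      note Sp = lp_split[OF P less.prems(3) ysd ys0ne, of, simplified, folded P0_def]
      have Sp3: "edges P = insert (z, y) (edges P0)" using Sp(3) by (simp add: z_def)
      have Sp4: "(z, y) \<notin> edges P0" using Sp(4) by (simp add: z_def)
      have xsP0: "xs \<in> P0" using less.prems(2,4) by (simp add: P0_def)
      have ys0P0: "ys0 \<in> P0" by (simp add: P0_def)
      have xs0: "xs \<noteq> ys0" using less.prems(5) disj ysd by auto
      have fE0: "finite (edges P0)" using finite_edges[OF Sp(1)] .
      have c1: "card (edges P) = Suc (card (edges P0))" unfolding Sp3 using Sp4 fE0 by simp
      define k' where "k' = card (edges P0)"
      have k': "k = Suc k'" using c1 cE less.prems(7) by (simp add: k'_def)
      have cP0: "card P0 + k' = n" using Sp(2) less.prems(7) k' by simp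
      have IH: "wedge (r a b) (mono (edges P0)) \<in> WZ n (Suc k') (Sing P0 - {a, b})"
      proof -
        have "length ys0 < length ys" using ysd by simp
        then show ?thesis using less.hyps[OF _ Sp(1) xsP0 ys0P0 xs0 less.prems(5) bys0 cP0] by simp
      qed
      have g: "(z, y) \<in> gens n" using inn[of z] inn[of y] zys0 ysd zy by (auto simp: gens_def)
      have step: "wedge (r z y) (wedge (r a b) (mono (edges P0))) \<in> WZ n (Suc k) (Sing P - {a, b})"
        unfolding k'
      proof (rule lift[OF g IH])
        fix P' assume P': "lp n P'" "card P' + Suc k' = n" "Sing P0 - {a, b} \<subseteq> Sing P'"
        have "y \<in> Sing P0" by (simp add: Sing_def P0_def)
        moreover have "y \<noteq> a" using disj less.prems(5) ysd by auto
        ultimately have yP': "[y] \<in> P'" using P'(3) yb by (auto simp: Sing_def)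
        have "z \<in> {1..n}" using inn zys0 ysd by auto
        then obtain zs where zs: "zs \<in> P'" "z \<in> set zs" using lp_cover[OF P'(1)] by blast
        then obtain pre post where zs': "zs = pre @ z # post" by (meson split_list)
        have I: "wedge (r z y) (mono (edges P')) \<in> WZ n (Suc (Suc k')) (Sing P' - {z, y})"
          by (rule InsA[OF P'(1) zs(1) zs' yP' zy P'(2)])
        have "Sing P - {a, b} \<subseteq> Sing P' - {z, y}"
        proof
          fix t assume t: "t \<in> Sing P - {a, b}"
          have "t \<noteq> z" using sing_not[OF P less.prems(3), of z y] t zy zys0 ysd by auto
          moreover have "t \<noteq> y" using sing_not[OF P less.prems(3), of y z] t zy zys0 ysd by auto
          moreover have "t \<in> Sing P'" using t Sp(5) P'(3) by auto
          ultimately show "t \<in> Sing P' - {z, y}" by simp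
        qed
        then show "wedge (r z y) (mono (edges P')) \<in> WZ n (Suc (Suc k')) (Sing P - {a, b})"
          using I WZ_mono by blast
      qed
      have "wedge (r a b) (mono (edges P)) = - qscale (wsign {(z, y)} (edges P0)) (wedge (r z y) (wedge (r a b) (mono (edges P0))))"
        unfolding Sp3 mono_insert_eq[OF fE0 Sp4] wedge_scale2 swap_r[of a b z y] by (simp only: qscale_uminus)
      then show ?thesis using WZ_neg_scale[OF step] by simp
    next
      case True
      define y where "y = hd ys"
      define ys1 where "ys1 = tl ys"
      have ysd: "ys = [y] @ ys1" using len2 by (cases ys) (auto simp: y_def ys1_def)
      have ys1ne: "ys1 \<noteq> []" using len2 ysd by auto
      have bys1: "b \<in> set ys1" using True ysd ys1ne by (metis append_Cons append_Nil last_ConsR last_in_set)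
      define z where "z = hd ys1"
      have zys1: "z \<in> set ys1" using ys1ne by (simp add: z_def)
      have zy: "z \<noteq> y" using dys ysd zys1 by auto
      have yb: "y \<noteq> b" using dys ysd bys1 by auto
      define P0 where "P0 = insert [y] (insert ys1 (P - {ys}))"
      note Sp = lp_split[OF P less.prems(3) ysd _ ys1ne, simplified, folded P0_def]
      have Sp3: "edges P = insert (y, z) (edges P0)" using Sp(3) by (simp add: z_def)
      have Sp4: "(y, z) \<notin> edges P0" using Sp(4) by (simp add: z_def)
      have xsP0: "xs \<in> P0" using less.prems(2,4) by (simp add: P0_def)
      have ys1P0: "ys1 \<in> P0" by (simp add: P0_def)
      have xs1: "xs \<noteq> ys1" using less.prems(5) disj ysd by auto
      have fE0: "finite (edges P0)" using finite_edges[OF Sp(1)] .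
      have c1: "card (edges P) = Suc (card (edges P0))" unfolding Sp3 using Sp4 fE0 by simp
      define k' where "k' = card (edges P0)"
      have k': "k = Suc k'" using c1 cE less.prems(7) by (simp add: k'_def)
      have cP0: "card P0 + k' = n" using Sp(2) less.prems(7) k' by simp
      have IH: "wedge (r a b) (mono (edges P0)) \<in> WZ n (Suc k') (Sing P0 - {a, b})"
      proof -
        have "length ys1 < length ys" using ysd by simp
        then show ?thesis using less.hyps[OF _ Sp(1) xsP0 ys1P0 xs1 less.prems(5) bys1 cP0] by simp
      qed
      have g: "(y, z) \<in> gens n" using inn[of z] inn[of y] zys1 ysd zy by (auto simp: gens_def)
      have step: "wedge (r y z) (wedge (r a b) (mono (edges P0))) \<in> WZ n (Suc k) (Sing P - {a, b})"
        unfolding k'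
      proof (rule lift[OF g IH])
        fix P' assume P': "lp n P'" "card P' + Suc k' = n" "Sing P0 - {a, b} \<subseteq> Sing P'"
        have "y \<in> Sing P0" by (simp add: Sing_def P0_def)
        moreover have "y \<noteq> a" using disj less.prems(5) ysd by auto
        ultimately have yP': "[y] \<in> P'" using P'(3) yb by (auto simp: Sing_def)
        have "z \<in> {1..n}" using inn zys1 ysd by auto
        then obtain zs where zs: "zs \<in> P'" "z \<in> set zs" using lp_cover[OF P'(1)] by blast
        then obtain pre post where zs': "zs = pre @ z # post" by (meson split_list)
        have I: "wedge (r y z) (mono (edges P')) \<in> WZ n (Suc (Suc k')) (Sing P' - {z, y})"
          by (rule InsB[OF P'(1) zs(1) zs' yP' zy P'(2)])
        have "Sing P - {a, b} \<subseteq> Sing P' - {z, y}"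
        proof
          fix t assume t: "t \<in> Sing P - {a, b}"
          have "t \<noteq> z" using sing_not[OF P less.prems(3), of z y] t zy zys1 ysd by auto
          moreover have "t \<noteq> y" using sing_not[OF P less.prems(3), of y z] t zy zys1 ysd by auto
          moreover have "t \<in> Sing P'" using t Sp(5) P'(3) by auto
          ultimately show "t \<in> Sing P' - {z, y}" by simp
        qed
        then show "wedge (r y z) (mono (edges P')) \<in> WZ n (Suc (Suc k')) (Sing P - {a, b})"
          using I WZ_mono by blast
      qed
      have "wedge (r a b) (mono (edges P)) = - qscale (wsign {(y, z)} (edges P0)) (wedge (r y z) (wedge (r a b) (mono (edges P0))))"
        unfolding Sp3 mono_insert_eq[OF fE0 Sp4] wedge_scale2 swap_r[of a b y z] by (simp only: qscale_uminus)
      then show ?thesis using WZ_neg_scale[OF step] by simp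
    qed
  qed
qed


lemma ledges_sub_edges: "xs \<in> P \<Longrightarrow> ledges xs \<subseteq> edges P" by (auto simp: edges_def)

lemma same_list_case:
  assumes P: "lp n P" and xs: "xs \<in> P" and a: "a \<in> set xs" and b: "b \<in> set xs" and ab: "a \<noteq> b"
    and nin: "(a, b) \<notin> edges P"
  shows "mono (insert (a, b) (edges P)) \<in> ideal_deg n (card (insert (a, b) (edges P)))"
proof -
  define S where "S = insert (a, b) (edges P)"
  have dx: "distinct xs" using lpD(2)[OF P xs] .
  obtain i where i: "i < length xs" "xs ! i = a" using a by (meson in_set_conv_nth)
  obtain j where j: "j < length xs" "xs ! j = b" using b by (meson in_set_conv_nth)
  have ij: "i \<noteq> j" using i j ab by auto
  have Sg: "S \<subseteq> gens n" unfolding S_def using edges_gens[OF P] lp_range[OF P xs] a b ab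
    by (auto simp: gens_def)
  have eP: "(xs ! t, xs ! Suc t) \<in> S" if "Suc t < length xs" for t
  proof -
    have "(xs ! t, xs ! Suc t) \<in> ledges xs" using that by (auto simp: ledges_nth)
    then show ?thesis using ledges_sub_edges[OF xs] unfolding S_def by blast
  qed
  show ?thesis
  proof (cases "i = Suc j")
    case True
    have "(b, a) \<in> S" using eP[of j] True i j by simp
    moreover have "(a, b) \<in> S" by (simp add: S_def)
    ultimately show ?thesis using two_cycle[OF Sg] unfolding S_def by blast
  next
    case False
    have jSi: "j \<noteq> Suc i"
    proof
      assume "j = Suc i" then have "(a, b) \<in> ledges xs" using i j by (auto simp: ledges_nth)
      then show False using nin ledges_sub_edges[OF xs] by blast
    qed
    define l where "l = min i j"
    define h where "h = max i j"
    have lh: "l + 2 \<le> h" "h < length xs" using ij False jSi i j by (auto simp: l_def h_def)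
    define cs where "cs = map (\<lambda>t. xs ! t) [l..<Suc h]"
    have len: "length cs = Suc h - l" using lh by (simp add: cs_def Suc_diff_le)
    have cs_nth: "cs ! t = xs ! (l + t)" if "t < Suc h - l" for t using that by (simp add: cs_def del: upt_Suc)
    have dcs: "distinct cs" unfolding cs_def
      by (rule distinct_map[THEN iffD2]) (use dx lh in \<open>auto simp: inj_on_def nth_eq_iff_index_eq\<close>)
    have scs: "set cs \<subseteq> {1..n}" using lp_range[OF P xs] lh by (auto simp: cs_def)
    have cy: "cyc S cs" unfolding cyc_def
    proof (intro conjI allI impI)
      fix t assume t: "Suc t < length cs"
      have "(xs ! (l + t), xs ! Suc (l + t)) \<in> S" using eP[of "l + t"] t len lh by simp
      then show "conn S (cs ! t) (cs ! Suc t)" using t len cs_nth by (simp add: conn_def)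
    next
      have "last cs = xs ! h" "hd cs = xs ! l" using lh by (simp_all add: cs_def last_map hd_map)
      moreover have "{xs ! h, xs ! l} = {a, b}" using i j by (auto simp: l_def h_def max_def min_def)
      ultimately show "conn S (last cs) (hd cs)" by (auto simp: conn_def S_def doubleton_eq_iff)
    qed
    have "mono S \<in> ideal_deg n (card S)"
      by (rule cycle_ideal[OF dcs _ scs Sg cy]) (use len lh in simp)
    then show ?thesis by (simp add: S_def)
  qed
qed

lemma closure:
  assumes P: "lp n P" and c: "card P + k = n" and a: "a \<in> {1..n}" and b: "b \<in> {1..n}" and ab: "a \<noteq> b"
  shows "wedge (r a b) (mono (edges P)) \<in> WZ n (Suc k) {}"
proof -
  obtain xs where xs: "xs \<in> P" "a \<in> set xs" using lp_cover[OF P a] by blast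
  obtain ys where ys: "ys \<in> P" "b \<in> set ys" using lp_cover[OF P b] by blast
  show ?thesis
  proof (cases "xs = ys")
    case False
    show ?thesis using merge[OF P xs(1) ys(1) False xs(2) ys(2) c] WZ_mono[of "{}"] by blast
  next
    case True
    show ?thesis
    proof (cases "(a, b) \<in> edges P")
      case True
      then show ?thesis using rmul0[OF finite_edges[OF P] True] by (simp add: WZ_def Q.span_zero)
    next
      case nin: False
      have cS: "card (insert (a, b) (edges P)) = Suc k"
        using card_edges[OF P] c nin finite_edges[OF P] by simp
      have "mono (insert (a, b) (edges P)) \<in> WZ n (Suc k) {}"
        using same_list_case[OF P xs(1) xs(2) _ ab nin] ys True cS WZ_ideal by auto
      then show ?thesis using rmul_WZ[OF finite_edges[OF P] nin] by simp
    qed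
  qed
qed

definition P1 :: "nat \<Rightarrow> nat list set" where "P1 n = (\<lambda>i. [i]) ` {1..n}"

lemma P1: "lp n (P1 n)" "card (P1 n) = n" "edges (P1 n) = {}"
proof -
  show "lp n (P1 n)" unfolding lp_def P1_def by auto
  have "inj_on (\<lambda>i. [i]) {1..n}" by (auto simp: inj_on_def)
  then show "card (P1 n) = n" unfolding P1_def by (simp add: card_image)
  show "edges (P1 n) = {}" by (auto simp: P1_def edges_def)
qed

lemma span_all: assumes "S \<subseteq> gens n" shows "mono S \<in> WZ n (card S) {}"
  using assms
proof (induction "card S" arbitrary: S)
  case 0
  have fS: "finite S" using 0 finite_gens finite_subset by blast
  then have "S = {}" using 0 by simp
  then show ?case using WZ_gen[OF P1(1), where k=0 and Z="{}"] P1 by simp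
next
  case (Suc m)
  have fS: "finite S" using Suc finite_gens finite_subset by blast
  obtain e where e: "e \<in> S" using Suc by (metis card.empty ex_in_conv nat.simps(3))
  obtain a b where eab: "e = (a, b)" by (cases e)
  define S' where "S' = S - {e}"
  have cS': "card S' = m" using Suc e fS by (simp add: S'_def)
  have IH: "mono S' \<in> WZ n m {}" using Suc.hyps(1)[of S'] cS' Suc.prems by (auto simp: S'_def)
  have fS': "finite S'" using fS by (simp add: S'_def)
  have nS': "(a, b) \<notin> S'" using eab by (simp add: S'_def)
  have g: "(a, b) \<in> gens n" using Suc.prems e eab by auto
  have ab: "a \<in> {1..n}" "b \<in> {1..n}" "a \<noteq> b" using g by (auto simp: gens_def)
  have "wedge (r a b) (mono S') \<in> WZ n (Suc m) {}"
    by (rule lift[OF g IH]) (rule closure[OF _ _ ab])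
  then have "mono (insert (a, b) S') \<in> WZ n (Suc m) {}" using rmul_WZ[OF fS' nS'] by simp
  moreover have "insert (a, b) S' = S" using e eab by (auto simp: S'_def)
  ultimately show ?case using Suc.hyps(2) by simp
qed


definition Mk :: "nat \<Rightarrow> nat \<Rightarrow> ext set" where "Mk n p = {mono S | S. S \<subseteq> gens n \<and> card S = p}"

lemma wedge_span1:
  assumes "\<And>x. x \<in> S \<Longrightarrow> wedge x h \<in> Q.span T" "y \<in> Q.span S"
  shows "wedge y h \<in> Q.span T"
  using assms(2)
proof (induction rule: Q.span_induct)
  case base
  show ?case unfolding Q.subspace_def
    by (auto simp: wedge_add1 wedge_scale1 intro: Q.span_zero Q.span_add Q.span_scale)
next
  case (step x) then show ?case using assms(1) by blast
qed

lemma mono_deg: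
  assumes "S \<subseteq> gens n" "T \<subseteq> gens n"
  shows "wedge (mono S) (mono T) \<in> Q.span (Mk n (card S + card T))"
proof -
  have f: "finite S" "finite T" using assms finite_gens finite_subset by blast+
  show ?thesis
  proof (cases "S \<inter> T = {}")
    case True
    have "mono (S \<union> T) \<in> Mk n (card S + card T)"
      using assms f True by (auto simp: Mk_def card_Un_disjoint)
    then show ?thesis using f True by (simp add: mono_mult Q.span_scale Q.span_base)
  next
    case False
    then show ?thesis using f by (simp add: mono_mult Q.span_zero)
  qed
qed

lemma DEG:
  assumes x: "x \<in> Q.span (Mk n p)" and y: "y \<in> Q.span (Mk n q)"
  shows "wedge x y \<in> Q.span (Mk n (p + q))"
proof -
  have "wedge s y \<in> Q.span (Mk n (p + q))" if s: "s \<in> Mk n p" for s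
  proof -
    obtain S where S: "s = mono S" "S \<subseteq> gens n" "card S = p" using s by (auto simp: Mk_def)
    have "wedge s t \<in> Q.span (Mk n (p + q))" if t: "t \<in> Mk n q" for t
    proof -
      obtain T where T: "t = mono T" "T \<subseteq> gens n" "card T = q" using t by (auto simp: Mk_def)
      show ?thesis using mono_deg[OF S(2) T(2)] S T by simp
    qed
    then show ?thesis using wedge_span[OF _ y] by blast
  qed
  then show ?thesis using wedge_span1[OF _ x] by blast
qed

lemma r_deg: "(i, j) \<in> gens n \<Longrightarrow> r i j \<in> Q.span (Mk n 1)"
  by (rule Q.span_base) (auto simp: Mk_def r_mono)

lemma rels_deg: assumes "q \<in> rels n" shows "q \<in> Q.span (Mk n 2)"
proof -
  have rr: "wedge (r i j) (r k l) \<in> Q.span (Mk n 2)" if "(i, j) \<in> gens n" "(k, l) \<in> gens n" for i j k l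
    using DEG[OF r_deg[OF that(1)] r_deg[OF that(2)]] by (simp add: numeral_2_eq_2)
  have g: "\<And>a b. a \<in> {1..n} \<Longrightarrow> b \<in> {1..n} \<Longrightarrow> a \<noteq> b \<Longrightarrow> (a, b) \<in> gens n" by (auto simp: gens_def)
  from assms show ?thesis unfolding rels_def
    by (elim UnE CollectE exE conjE) (simp_all add: Q.span_diff rr g)
qed

lemma ideal_ext: "ideal_deg n k \<subseteq> ext_deg n k"
proof -
  have "ext_deg n k = Q.span (Mk n k)" by (simp add: ext_deg_def Mk_def)
  moreover have "y \<in> Q.span (Mk n k)" if y: "y \<in> {wedge (wedge (mono A) q) (mono B) | A B q.
        A \<subseteq> gens n \<and> B \<subseteq> gens n \<and> card A + card B + 2 = k \<and> q \<in> rels n}" for y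
  proof -
    obtain A B q where y': "y = wedge (wedge (mono A) q) (mono B)" "A \<subseteq> gens n" "B \<subseteq> gens n"
        "card A + card B + 2 = k" "q \<in> rels n" using y by blast
    have "mono A \<in> Q.span (Mk n (card A))" by (rule Q.span_base) (use y'(2) in \<open>auto simp: Mk_def\<close>)
    moreover have "mono B \<in> Q.span (Mk n (card B))" by (rule Q.span_base) (use y'(3) in \<open>auto simp: Mk_def\<close>)
    ultimately have "y \<in> Q.span (Mk n (card A + 2 + card B))"
      using DEG[OF DEG[OF _ rels_deg[OF y'(5)]]] y'(1) by blast
    then show ?thesis using y'(4) by (simp add: add.commute add.left_commute)
  qed
  ultimately show ?thesis unfolding ideal_deg_def
    by (metis (no_types, lifting) Q.span_minimal Q.subspace_span subsetI)
qed

lemma finite_Mk: "finite (Mk n k)"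
proof -
  have "Mk n k \<subseteq> mono ` Pow (gens n)" by (auto simp: Mk_def)
  then show ?thesis using finite_gens by (meson finite_Pow_iff finite_imageI finite_subset)
qed


lemma WZ_empty_eq: "WZ n k {} = Q.span ((\<lambda>P. mono (edges P)) ` {P. lp n P \<and> card P + k = n} \<union> ideal_deg n k)"
proof -
  have "{mono (edges P) | P. lp n P \<and> card P + k = n \<and> {} \<subseteq> Sing P} = (\<lambda>P. mono (edges P)) ` {P. lp n P \<and> card P + k = n}"
    by auto
  then show ?thesis unfolding WZ_def by simp
qed

theorem corollary5p6:
  fixes n k :: nat
  assumes "k \<le> n - 1" and "1 \<le> n"
  shows "pvb_dual_dim n k = lah n (n - k)"
proof -
  define V where "V = ext_deg n k"
  define I where "I = ideal_deg n k"
  define LP where "LP = {P. lp n P \<and> card P + k = n}"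
  define Bk where "Bk = (\<lambda>P. mono (edges P)) ` LP"
  define L where "L Q = Lin (xm Q) (gens n)" for Q
  have kn: "k \<le> n" using assms by simp
  have LPeq: "lah_partitions n (n - k) = LP" using kn by (auto simp: lah_partitions_lp LP_def)
  have VMk: "V = Q.span (Mk n k)" by (simp add: V_def ext_deg_def Mk_def)
  have L0: "L Q x = 0" if "Q \<in> LP" "x \<in> I" for Q x
    using Lin_ideal[of n Q x k] that by (simp add: L_def LP_def I_def)
  have L1: "L Q (mono (edges P)) = 0" if "P \<in> LP" "Q \<in> LP" "P \<noteq> Q" for P Q
    using Lin_other_zero[of n P Q] that by (simp add: L_def LP_def)
  have L2: "L Q (mono (edges Q)) \<noteq> 0" if "Q \<in> LP" for Q
    using Lin_own_nonzero[of n Q] that by (simp add: L_def LP_def)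
  have Llin: "L Q (\<Sum>x\<in>X. qscale (f x) x) = (\<Sum>x\<in>X. qscale (f x) (L Q x))" for Q X f
    by (simp add: L_def Lin_sum Lin_scale)
  have inj: "inj_on (\<lambda>P. mono (edges P)) LP"
  proof (rule inj_onI)
    fix P P' assume P: "P \<in> LP" "P' \<in> LP" "mono (edges P) = mono (edges P')"
    show "P = P'"
    proof (rule ccontr)
      assume "P \<noteq> P'"
      then have "L P' (mono (edges P)) = 0" using L1 P by blast
      then show False using L2[OF P(2)] P(3) by simp
    qed
  qed
  have BkI: "Bk \<inter> I = {}"
  proof (rule ccontr)
    assume "Bk \<inter> I \<noteq> {}"
    then obtain Q where Q: "Q \<in> LP" "mono (edges Q) \<in> I" by (auto simp: Bk_def)
    then show False using L0 L2 by blast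
  qed
  have BkMk: "Bk \<subseteq> Mk n k"
    using card_edges edges_gens by (fastforce simp: Bk_def LP_def Mk_def)
  have finBk: "finite Bk" using finite_subset[OF BkMk finite_Mk] .
  have BkV: "Bk \<subseteq> V" unfolding VMk using BkMk Q.span_superset by blast
  have IV: "I \<subseteq> V" using ideal_ext by (simp add: I_def V_def)
  have VW: "V \<subseteq> Q.span (Bk \<union> I)"
  proof -
    have "Mk n k \<subseteq> Q.span (Bk \<union> I)"
    proof
      fix x assume "x \<in> Mk n k"
      then obtain S where S: "x = mono S" "S \<subseteq> gens n" "card S = k" by (auto simp: Mk_def)
      have "mono S \<in> WZ n (card S) {}" by (rule span_all[OF S(2)])
      then show "x \<in> Q.span (Bk \<union> I)" using S by (simp add: WZ_empty_eq Bk_def LP_def I_def)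
    qed
    then show ?thesis unfolding VMk by (simp add: Q.span_minimal)
  qed
  obtain bI where bI: "bI \<subseteq> I" "Q.independent bI" "I \<subseteq> Q.span bI" "card bI = Q.dim I"
    by (rule Q.basis_exists)
  have finbI: "finite bI"
    using Q.independent_span_bound[OF finite_Mk bI(2)] bI(1) IV VMk by blast
  define D where "D = Bk \<union> bI"
  have DV: "D \<subseteq> V" using BkV bI(1) IV by (auto simp: D_def)
  have VD: "V \<subseteq> Q.span D"
  proof -
    have "Bk \<union> I \<subseteq> Q.span D" using bI(3) Q.span_mono[of bI D] Q.span_superset[of D]
      by (auto simp: D_def)
    then have "Q.span (Bk \<union> I) \<subseteq> Q.span D" by (simp add: Q.span_minimal)
    then show ?thesis using VW by blast
  qed
  have finD: "finite D" using finBk finbI by (simp add: D_def)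
  have indep: "Q.independent D"
  proof (rule Q.independent_if_scalars_zero[OF finD])
    fix f x assume sum0: "(\<Sum>x\<in>D. qscale (f x) x) = 0" and xD: "x \<in> D"
    have Dsplit: "D = Bk \<union> (bI - Bk)" by (auto simp: D_def)
    have disj: "Bk \<inter> (bI - Bk) = {}" by auto
    define s1 where "s1 = (\<Sum>x\<in>Bk. qscale (f x) x)"
    define s2 where "s2 = (\<Sum>x\<in>bI - Bk. qscale (f x) x)"
    have s12: "s1 + s2 = 0" using sum0 unfolding Dsplit s1_def s2_def
      by (subst (asm) sum.union_disjoint) (use finBk finbI disj in auto)
    have s2I: "s2 \<in> I" unfolding s2_def I_def
      by (rule Q.subspace_sum[OF ideal_subspace]) (use bI(1) I_def in \<open>auto intro: Q.subspace_scale[OF ideal_subspace]\<close>)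
    have fBk: "f y = 0" if y: "y \<in> Bk" for y
    proof -
      obtain Q where Q: "Q \<in> LP" "y = mono (edges Q)" using y by (auto simp: Bk_def)
      have "L Q (s1 + s2) = 0" using s12 by (simp add: L_def Lin_zero)
      moreover have "L Q s2 = 0" using L0[OF Q(1) s2I] .
      ultimately have "L Q s1 = 0" by (simp add: L_def Lin_add)
      moreover have "L Q s1 = (\<Sum>x\<in>Bk. qscale (f x) (L Q x))" unfolding s1_def by (rule Llin)
      moreover have "(\<Sum>x\<in>Bk. qscale (f x) (L Q x)) = qscale (f y) (L Q y)"
      proof -
        have "(\<Sum>x\<in>Bk. qscale (f x) (L Q x)) = qscale (f y) (L Q y) + (\<Sum>x\<in>Bk - {y}. qscale (f x) (L Q x))"
          using finBk y by (simp add: sum.remove)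
        moreover have "(\<Sum>x\<in>Bk - {y}. qscale (f x) (L Q x)) = 0"
        proof (rule sum.neutral, rule ballI)
          fix z assume z: "z \<in> Bk - {y}"
          then obtain P where P: "P \<in> LP" "z = mono (edges P)" by (auto simp: Bk_def)
          have "P \<noteq> Q" using z P Q by auto
          then show "qscale (f z) (L Q z) = 0" using L1[OF P(1) Q(1)] P(2) by simp
        qed
        ultimately show ?thesis by simp
      qed
      ultimately have "qscale (f y) (L Q y) = 0" by simp
      then show "f y = 0" using L2[OF Q(1)] Q(2) by simp
    qed
    show "f x = 0"
    proof (cases "x \<in> Bk")
      case True then show ?thesis using fBk by blast
    next
      case False
      have "s1 = 0" unfolding s1_def using fBk by simp
      then have "s2 = 0" using s12 by simp
      then show ?thesis
        using Q.independentD[OF bI(2), of "bI - Bk" f x] finbI xD False unfolding s2_def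
        by (auto simp: D_def)
    qed
  qed
  have cardD: "card D = Q.dim V" by (rule Q.basis_card_eq_dim[OF DV VD indep])
  have "Bk \<inter> bI = {}" using BkI bI(1) by blast
  then have cD: "card D = card Bk + card bI" unfolding D_def using finBk finbI by (simp add: card_Un_disjoint)
  have cBk: "card Bk = card LP" unfolding Bk_def by (rule card_image[OF inj])
  have "pvb_dual_dim n k = Q.dim V - Q.dim I" by (simp add: pvb_dual_dim_def V_def I_def)
  also have "\<dots> = card LP" using cardD cD cBk bI(4) by simp
  also have "\<dots> = lah n (n - k)" by (simp add: lah_def LPeq)
  finally show ?thesis .
qed

end
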